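(* (Structure of pre-$\mathbb{Z}/2\mathbb{Z}$-Frobenius manifolds.) With $H$, $\eta$, $Y$ constructed as in the context, suppose that $Y$ has $G$-degree $e$ as an element of $\mathrm{T}\llbracket H^\ast\rrbracket=\prod_n (H^\ast)^{\otimes n}$, and that $\eta_i,\eta_v,\eta_g$ are $S^2$-homogeneous of degrees $(i,i)$, $(v,v)$, $(g,g)$ respectively. Then $((H,\rho),\eta,Y)$ is a pre-$\mathbb{Z}/2\mathbb{Z}$-Frobenius manifold. Conversely, the $\eta$ and $Y$ of any pre-$\mathbb{Z}/2\mathbb{Z}$-Frobenius manifold $((H,\rho),\eta,Y)$ are of this form, and are uniquely determined by the metrics and potentials of the two Frobenius manifolds it contains (on $H_e$ and on $H^G$).
   Context: $G=\mathbb{Z}/2\mathbb{Z}=\{e,g\}$, $k$ a field of characteristic zero. Let $(H_e,\eta_e,Y_e)$ and $(H^G,\eta^G,Y^G)$ be formal Frobenius manifolds (potentials in the power series ring satisfying WDVV). Suppose there is a vector space $H_i$ with linear injections $\iota_e:H_i\to H_e$, $\iota^G:H_i\to H^G$ such that $\iota_e^\ast Y_e=(\iota^G)^\ast Y^G=:Y_i$ and $\iota_e^\ast\eta_e=(\iota^G)^\ast\eta^G=:\eta_i$. Fix decompositions $H_e=H_i\oplus H_v$, $H^G=H_i\oplus H_g$, and write $Y_e=Y_i+Y_v$, $Y^G=Y_i+Y_g$, $\eta_e=\eta_i+\eta_v$, $\eta^G=\eta_i+\eta_g$ with $\iota_e^\ast Y_v=(\iota^G)^\ast Y_g=0$ and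 $\iota_e^\ast\eta_v=(\iota^G)^\ast\eta_g=0$. Let $H:=H_i\oplus H_v\oplus H_g$ be the $\mathbb{Z}/2\mathbb{Z}$-graded $\mathbb{Z}/2\mathbb{Z}$-module with $H_e=H_i\oplus H_v$ in degree $e$, $H_g$ in degree $g$, where $g$ acts trivially on $H_i$ and $H_g$ and by $-1$ on $H_v$. Set $Y:=Y_i+Y_v+Y_g$ and $\eta:=\eta_i+\eta_v+\eta_g$, extended by zero. With $S=\{i,v,g\}$, homogeneous terms have $S^n$-degrees. A pre-$G$-Frobenius manifold $((H,\rho),\eta,Y)$ is: a finite dimensional self-invariant $G$-graded $G$-module, a $G$-invariant nondegenerate symmetric bilinear form $\eta$ preserving the $G$-grading, and $Y=\sum_{n\ge3}Y^n$ with each $Y^n$ a $B_n$-invariant $n$-linear form on $H$ of $G$-degree $e$ (with $B_n$ acting through the braiding $v\otimes w\mapsto (h\cdot w)\otimes v$ for $v\in H_h$), such that the restrictions of $Y$ and $\eta$ to $H_e$ and to $H^G$ are formal Frobenius manifolds. *)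

theory Defs
  imports Complex_Main
begin

text \<open>
  The group G = Z/2Z = {e,g} acts through
  rho = rho(g) (rho(e) is the identity).  A tensor-algebra element
  Y = sum_n Y^n is represented as a single function on lists of vectors,
  the n-th component being its restriction to lists of length n.
\<close>

definition bilinear_on :: "('k::field \<Rightarrow> 'v::ab_group_add \<Rightarrow> 'v) \<Rightarrow> 'v set \<Rightarrow> ('v \<Rightarrow> 'v \<Rightarrow> 'k) \<Rightarrow> bool" where
  "bilinear_on scale V eta \<longleftrightarrow>
     (\<forall>a x y z. x \<in> V \<longrightarrow> y \<in> V \<longrightarrow> z \<in> V \<longrightarrow>
        eta (scale a x + y) z = a * eta x z + eta y z \<and>
        eta z (scale a x + y) = a * eta z x + eta z y)"

definition multilinear_on :: "('k::field \<Rightarrow> 'v::ab_group_add \<Rightarrow> 'v) \<Rightarrow> 'v set \<Rightarrow> ('v list \<Rightarrow> 'k) \<Rightarrow> bool" where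
  "multilinear_on scale V Y \<longleftrightarrow>
     (\<forall>xs ys a x y. set xs \<subseteq> V \<longrightarrow> set ys \<subseteq> V \<longrightarrow> x \<in> V \<longrightarrow> y \<in> V \<longrightarrow>
        Y (xs @ (scale a x + y) # ys) = a * Y (xs @ x # ys) + Y (xs @ y # ys))"

text \<open>Symmetry (invariance under all adjacent transpositions, hence under S_n).\<close>
definition symmetric_on :: "'v set \<Rightarrow> ('v list \<Rightarrow> 'k) \<Rightarrow> bool" where
  "symmetric_on V Y \<longleftrightarrow>
     (\<forall>xs ys x y. set xs \<subseteq> V \<longrightarrow> set ys \<subseteq> V \<longrightarrow> x \<in> V \<longrightarrow> y \<in> V \<longrightarrow>
        Y (xs @ x # y # ys) = Y (xs @ y # x # ys))"

definition fin_dim_on :: "('k::field \<Rightarrow> 'v::ab_group_add \<Rightarrow> 'v) \<Rightarrow> 'v set \<Rightarrow> bool" where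
  "fin_dim_on scale V \<longleftrightarrow> (\<exists>B. finite B \<and> B \<subseteq> V \<and> module.span scale B = V)"

text \<open>bs is a basis of V and bs' is its eta-dual basis, i.e.
  bs'_e = sum_f eta^{ef} bs_f, with eta^{ef} the inverse Gram matrix.\<close>
definition dual_bases :: "('k::field \<Rightarrow> 'v::ab_group_add \<Rightarrow> 'v) \<Rightarrow> 'v set \<Rightarrow> ('v \<Rightarrow> 'v \<Rightarrow> 'k)
    \<Rightarrow> 'v list \<Rightarrow> 'v list \<Rightarrow> bool" where
  "dual_bases scale V eta bs bs' \<longleftrightarrow>
     distinct bs \<and> \<not> module.dependent scale (set bs) \<and> set bs \<subseteq> V \<and>
     module.span scale (set bs) = V \<and>
     length bs' = length bs \<and> set bs' \<subseteq> V \<and>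
     (\<forall>i<length bs. \<forall>j<length bs. eta (bs ! i) (bs' ! j) = (if i = j then 1 else 0))"

text \<open>WDVV equation, in the (polarized) tensor form: for all n and all
  a,b,c,d,x_1..x_n,
  sum_{S subset [n]} sum_{e,f} Y(a,b,e_e,x_S) eta^{ef} Y(e_f,c,d,x_{S^c})
    = sum_S sum_{e,f} Y(a,c,e_e,x_S) eta^{ef} Y(e_f,b,d,x_{S^c}).\<close>
definition WDVV_on :: "('k::field \<Rightarrow> 'v::ab_group_add \<Rightarrow> 'v) \<Rightarrow> 'v set \<Rightarrow> ('v \<Rightarrow> 'v \<Rightarrow> 'k)
    \<Rightarrow> ('v list \<Rightarrow> 'k) \<Rightarrow> bool" where
  "WDVV_on scale V eta Y \<longleftrightarrow>
     (\<forall>bs bs'. dual_bases scale V eta bs bs' \<longrightarrow>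
       (\<forall>a b c d xs. a \<in> V \<longrightarrow> b \<in> V \<longrightarrow> c \<in> V \<longrightarrow> d \<in> V \<longrightarrow> set xs \<subseteq> V \<longrightarrow>
          (\<Sum>S\<in>Pow {..<length xs}. \<Sum>j<length bs.
              Y (a # b # bs ! j # nths xs S) * Y (bs' ! j # c # d # nths xs (- S)))
        = (\<Sum>S\<in>Pow {..<length xs}. \<Sum>j<length bs.
              Y (a # c # bs ! j # nths xs S) * Y (bs' ! j # b # d # nths xs (- S)))))"

definition formal_frobenius :: "('k::field \<Rightarrow> 'v::ab_group_add \<Rightarrow> 'v) \<Rightarrow> 'v set \<Rightarrow> ('v \<Rightarrow> 'v \<Rightarrow> 'k)
    \<Rightarrow> ('v list \<Rightarrow> 'k) \<Rightarrow> bool" where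
  "formal_frobenius scale V eta Y \<longleftrightarrow>
     module.subspace scale V \<and> fin_dim_on scale V \<and>
     bilinear_on scale V eta \<and>
     (\<forall>x\<in>V. \<forall>y\<in>V. eta x y = eta y x) \<and>
     (\<forall>x\<in>V. (\<forall>y\<in>V. eta x y = 0) \<longrightarrow> x = 0) \<and>
     (\<forall>xs. set xs \<subseteq> V \<longrightarrow> length xs < 3 \<longrightarrow> Y xs = 0) \<and>
     multilinear_on scale V Y \<and> symmetric_on V Y \<and>
     WDVV_on scale V eta Y"

text \<open>G-degree e of Y: Y vanishes on every homogeneous component
  H_{h_1} x ... x H_{h_n} with h_1...h_n = g (odd number of factors in H_g).
  The list ds records the degrees (True = g, False = e).\<close>
definition G_degree_e :: "'v set \<Rightarrow> 'v set \<Rightarrow> ('v list \<Rightarrow> 'k::zero) \<Rightarrow> bool" where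
  "G_degree_e He Hg Y \<longleftrightarrow>
     (\<forall>xs ds. length ds = length xs \<longrightarrow>
        (\<forall>j<length xs. (ds ! j \<longrightarrow> xs ! j \<in> Hg) \<and> (\<not> ds ! j \<longrightarrow> xs ! j \<in> He)) \<longrightarrow>
        odd (length (filter id ds)) \<longrightarrow> Y xs = 0)"

text \<open>Invariance under the braid group B_n acting through the braiding
  v (x) w |-> (h.w) (x) v for v in H_h (checked on the generators).\<close>
definition braid_invariant :: "'v set \<Rightarrow> 'v set \<Rightarrow> ('v \<Rightarrow> 'v) \<Rightarrow> ('v list \<Rightarrow> 'k) \<Rightarrow> bool" where
  "braid_invariant He Hg rho Y \<longleftrightarrow>
     (\<forall>xs ys x y.
        (x \<in> He \<longrightarrow> Y (xs @ x # y # ys) = Y (xs @ y # x # ys)) \<and>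
        (x \<in> Hg \<longrightarrow> Y (xs @ x # y # ys) = Y (xs @ rho y # x # ys)))"

definition fixed_space :: "('v \<Rightarrow> 'v) \<Rightarrow> 'v set" where
  "fixed_space rho = {x. rho x = x}"

text \<open>Pre-Z/2Z-Frobenius manifold ((H,rho),eta,Y) with H = UNIV, grading
  H = He (+) Hg, and rho the action of the generator g.\<close>
definition pre_Z2_frobenius :: "('k::field \<Rightarrow> 'v::ab_group_add \<Rightarrow> 'v) \<Rightarrow> 'v set \<Rightarrow> 'v set
    \<Rightarrow> ('v \<Rightarrow> 'v) \<Rightarrow> ('v \<Rightarrow> 'v \<Rightarrow> 'k) \<Rightarrow> ('v list \<Rightarrow> 'k) \<Rightarrow> bool" where
  "pre_Z2_frobenius scale He Hg rho eta Y \<longleftrightarrow>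
     \<comment> \<open>finite dimensional G-graded G-module, self-invariant\<close>
     fin_dim_on scale UNIV \<and>
     module.subspace scale He \<and> module.subspace scale Hg \<and>
     He \<inter> Hg = {0} \<and> (\<forall>x. \<exists>a\<in>He. \<exists>b\<in>Hg. x = a + b) \<and>
     Vector_Spaces.linear scale scale rho \<and> (\<forall>x. rho (rho x) = x) \<and>
     rho ` He \<subseteq> He \<and> rho ` Hg \<subseteq> Hg \<and>
     (\<forall>x\<in>Hg. rho x = x) \<and>
     \<comment> \<open>metric\<close>
     bilinear_on scale UNIV eta \<and> (\<forall>x y. eta x y = eta y x) \<and>
     (\<forall>x. (\<forall>y. eta x y = 0) \<longrightarrow> x = 0) \<and>
     (\<forall>x y. eta (rho x) (rho y) = eta x y) \<and>
     (\<forall>x\<in>He. \<forall>y\<in>Hg. eta x y = 0) \<and>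
     \<comment> \<open>Y = sum_{n>=3} Y^n\<close>
     (\<forall>xs. length xs < 3 \<longrightarrow> Y xs = 0) \<and>
     multilinear_on scale UNIV Y \<and>
     braid_invariant He Hg rho Y \<and>
     G_degree_e He Hg Y \<and>
     \<comment> \<open>restrictions to He and to H^G\<close>
     formal_frobenius scale He eta Y \<and>
     formal_frobenius scale (fixed_space rho) eta Y"

definition direct3 :: "('k::field \<Rightarrow> 'v::ab_group_add \<Rightarrow> 'v) \<Rightarrow> 'v set \<Rightarrow> 'v set \<Rightarrow> 'v set \<Rightarrow> bool" where
  "direct3 scale A B C \<longleftrightarrow>
     module.subspace scale A \<and> module.subspace scale B \<and> module.subspace scale C \<and>
     (\<forall>a b c. a \<in> A \<longrightarrow> b \<in> B \<longrightarrow> c \<in> C \<longrightarrow> a + b + c = 0 \<longrightarrow> a = 0 \<and> b = 0 \<and> c = 0) \<and>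
     (\<forall>x. \<exists>a\<in>A. \<exists>b\<in>B. \<exists>c\<in>C. x = a + b + c)"

definition set_plus :: "'v::ab_group_add set \<Rightarrow> 'v set \<Rightarrow> 'v set" where
  "set_plus A B = {a + b | a b. a \<in> A \<and> b \<in> B}"

definition pr1 :: "'v::ab_group_add set \<Rightarrow> 'v set \<Rightarrow> 'v set \<Rightarrow> 'v \<Rightarrow> 'v" where
  "pr1 A B C x = (SOME a. a \<in> A \<and> (\<exists>b\<in>B. \<exists>c\<in>C. x = a + b + c))"
definition pr2 :: "'v::ab_group_add set \<Rightarrow> 'v set \<Rightarrow> 'v set \<Rightarrow> 'v \<Rightarrow> 'v" where
  "pr2 A B C x = (SOME b. b \<in> B \<and> (\<exists>a\<in>A. \<exists>c\<in>C. x = a + b + c))"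
definition pr3 :: "'v::ab_group_add set \<Rightarrow> 'v set \<Rightarrow> 'v set \<Rightarrow> 'v \<Rightarrow> 'v" where
  "pr3 A B C x = (SOME c. c \<in> C \<and> (\<exists>a\<in>A. \<exists>b\<in>B. x = a + b + c))"

text \<open>eta_i, eta_v, eta_g extended by zero (Hi = A, Hv = B, Hg = C;
  eta_e lives on A (+) B, eta^G on A (+) C).\<close>
definition eta_i where
  "eta_i A B C eta_e x y = eta_e (pr1 A B C x) (pr1 A B C y)"
definition eta_v where
  "eta_v A B C eta_e x y =
     eta_e (pr1 A B C x + pr2 A B C x) (pr1 A B C y + pr2 A B C y) - eta_i A B C eta_e x y"
definition eta_g where
  "eta_g A B C eta_e eta_G x y =
     eta_G (pr1 A B C x + pr3 A B C x) (pr1 A B C y + pr3 A B C y) - eta_i A B C eta_e x y"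
definition eta_glue where
  "eta_glue A B C eta_e eta_G x y =
     eta_i A B C eta_e x y + eta_v A B C eta_e x y + eta_g A B C eta_e eta_G x y"

definition Y_i where
  "Y_i A B C Y_e xs = Y_e (map (pr1 A B C) xs)"
definition Y_v where
  "Y_v A B C Y_e xs = Y_e (map (\<lambda>x. pr1 A B C x + pr2 A B C x) xs) - Y_i A B C Y_e xs"
definition Y_g where
  "Y_g A B C Y_e Y_G xs = Y_G (map (\<lambda>x. pr1 A B C x + pr3 A B C x) xs) - Y_i A B C Y_e xs"
definition Y_glue where
  "Y_glue A B C Y_e Y_G xs = Y_i A B C Y_e xs + Y_v A B C Y_e xs + Y_g A B C Y_e Y_G xs"

text \<open>S^2-homogeneity of degree (s,s): the form lives on H_s (x) H_s.\<close>
definition hom2 :: "('v \<Rightarrow> 'v) \<Rightarrow> ('v \<Rightarrow> 'v \<Rightarrow> 'k) \<Rightarrow> bool" where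
  "hom2 P f \<longleftrightarrow> (\<forall>x y. f x y = f (P x) (P y))"

end

theory Submission
  imports Defs
begin

context
  fixes scale :: "'k::field_char_0 \<Rightarrow> 'v::ab_group_add \<Rightarrow> 'v"
  assumes vs: "vector_space scale"
begin

interpretation V: vector_space scale by (rule vs)

lemma d3_unique:
  assumes d: "direct3 scale A B C"
    and m: "a \<in> A" "b \<in> B" "c \<in> C" "a' \<in> A" "b' \<in> B" "c' \<in> C"
    and e: "a + b + c = a' + b' + c'"
  shows "a = a' \<and> b = b' \<and> c = c'"
proof -
  have sA: "V.subspace A" and sB: "V.subspace B" and sC: "V.subspace C"
    and z: "\<And>a b c. a \<in> A \<Longrightarrow> b \<in> B \<Longrightarrow> c \<in> C \<Longrightarrow> a + b + c = 0 \<Longrightarrow> a = 0 \<and> b = 0 \<and> c = 0"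
    using d unfolding direct3_def by blast+
  have "(a - a') + (b - b') + (c - c') = 0" using e by (simp add: algebra_simps)
  moreover have "a - a' \<in> A" "b - b' \<in> B" "c - c' \<in> C"
    using m sA sB sC by (auto intro: V.subspace_diff)
  ultimately have "a - a' = 0 \<and> b - b' = 0 \<and> c - c' = 0" using z by blast
  then show ?thesis by simp
qed

lemma d3_pr:
  assumes d: "direct3 scale A B C"
    and m: "a \<in> A" "b \<in> B" "c \<in> C"
  shows "pr1 A B C (a + b + c) = a" "pr2 A B C (a + b + c) = b" "pr3 A B C (a + b + c) = c"
proof -
  have ex1: "\<exists>a'. a' \<in> A \<and> (\<exists>b'\<in>B. \<exists>c'\<in>C. a + b + c = a' + b' + c')" using m by blast
  from someI_ex[OF ex1] obtain b' c' where "pr1 A B C (a+b+c) \<in> A" "b'\<in>B" "c'\<in>C"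
    "a + b + c = pr1 A B C (a+b+c) + b' + c'" unfolding pr1_def by blast
  then show "pr1 A B C (a + b + c) = a" using d3_unique[OF d] m by metis
  have ex2: "\<exists>b'. b' \<in> B \<and> (\<exists>a'\<in>A. \<exists>c'\<in>C. a + b + c = a' + b' + c')" using m by blast
  from someI_ex[OF ex2] obtain a' c' where "pr2 A B C (a+b+c) \<in> B" "a'\<in>A" "c'\<in>C"
    "a + b + c = a' + pr2 A B C (a+b+c) + c'" unfolding pr2_def by blast
  then show "pr2 A B C (a + b + c) = b" using d3_unique[OF d] m by metis
  have ex3: "\<exists>c'. c' \<in> C \<and> (\<exists>a'\<in>A. \<exists>b'\<in>B. a + b + c = a' + b' + c')" using m by blast
  from someI_ex[OF ex3] obtain a' b' where "pr3 A B C (a+b+c) \<in> C" "a'\<in>A" "b'\<in>B"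
    "a + b + c = a' + b' + pr3 A B C (a+b+c)" unfolding pr3_def by blast
  then show "pr3 A B C (a + b + c) = c" using d3_unique[OF d] m by metis
qed

lemma d3_decomp:
  assumes d: "direct3 scale A B C"
  shows "x = pr1 A B C x + pr2 A B C x + pr3 A B C x \<and> pr1 A B C x \<in> A \<and> pr2 A B C x \<in> B \<and> pr3 A B C x \<in> C"
proof -
  obtain a b c where m: "a \<in> A" "b \<in> B" "c \<in> C" "x = a + b + c" using d unfolding direct3_def by blast
  show ?thesis using d3_pr[OF d m(1-3)] m by simp
qed

lemma d3_lin:
  assumes d: "direct3 scale A B C"
  shows "pr1 A B C (scale k x + y) = scale k (pr1 A B C x) + pr1 A B C y"
    "pr2 A B C (scale k x + y) = scale k (pr2 A B C x) + pr2 A B C y"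
    "pr3 A B C (scale k x + y) = scale k (pr3 A B C x) + pr3 A B C y"
proof -
  have sA: "V.subspace A" and sB: "V.subspace B" and sC: "V.subspace C"
    using d unfolding direct3_def by blast+
  let ?a = "pr1 A B C x" and ?b = "pr2 A B C x" and ?c = "pr3 A B C x"
  let ?a' = "pr1 A B C y" and ?b' = "pr2 A B C y" and ?c' = "pr3 A B C y"
  have x: "x = ?a + ?b + ?c" "?a \<in> A" "?b \<in> B" "?c \<in> C" using d3_decomp[OF d, of x] by auto
  have y: "y = ?a' + ?b' + ?c'" "?a' \<in> A" "?b' \<in> B" "?c' \<in> C" using d3_decomp[OF d, of y] by auto
  have eq: "scale k x + y = (scale k ?a + ?a') + (scale k ?b + ?b') + (scale k ?c + ?c')"
    by (subst x(1), subst y(1)) (simp add: V.scale_right_distrib algebra_simps)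
  have m: "scale k ?a + ?a' \<in> A" "scale k ?b + ?b' \<in> B" "scale k ?c + ?c' \<in> C"
    using x y sA sB sC by (auto intro!: V.subspace_add V.subspace_scale)
  show "pr1 A B C (scale k x + y) = scale k ?a + ?a'" unfolding eq using d3_pr[OF d m] by simp
  show "pr2 A B C (scale k x + y) = scale k ?b + ?b'" unfolding eq using d3_pr[OF d m] by simp
  show "pr3 A B C (scale k x + y) = scale k ?c + ?c'" unfolding eq using d3_pr[OF d m] by simp
qed

lemma ml_add:
  assumes "multilinear_on scale V Y" "set xs \<subseteq> V" "set ys \<subseteq> V" "x \<in> V" "y \<in> V"
  shows "Y (xs @ (x + y) # ys) = Y (xs @ x # ys) + Y (xs @ y # ys)"
  using assms unfolding multilinear_on_def by (metis V.scale_one mult_1)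

lemma ml_scale:
  assumes "multilinear_on scale V Y" "set xs \<subseteq> V" "set ys \<subseteq> V" "x \<in> V" "0 \<in> V"
  shows "Y (xs @ scale k x # ys) = k * Y (xs @ x # ys)"
proof -
  have z: "Y (xs @ 0 # ys) = 0"
    using assms(1)[unfolded multilinear_on_def, rule_format, of xs ys 0 0 1] assms by simp
  show ?thesis using assms(1)[unfolded multilinear_on_def, rule_format, of xs ys x 0 k] assms z by simp
qed

lemma ml_zero:
  assumes "multilinear_on scale V Y" "set xs \<subseteq> V" "set ys \<subseteq> V" "0 \<in> V"
  shows "Y (xs @ 0 # ys) = 0"
  using assms(1)[unfolded multilinear_on_def, rule_format, of xs ys 0 0 1] assms by simp

lemma ml_neg:
  assumes "multilinear_on scale V Y" "set xs \<subseteq> V" "set ys \<subseteq> V" "x \<in> V" "0 \<in> V"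
  shows "Y (xs @ (- x) # ys) = - Y (xs @ x # ys)"
  using ml_scale[OF assms, of "-1"] by (simp add: V.scale_minus_left)

lemma bl_lin:
  assumes "bilinear_on scale V eta" "x \<in> V" "y \<in> V" "z \<in> V"
  shows "eta (scale a x + y) z = a * eta x z + eta y z" "eta z (scale a x + y) = a * eta z x + eta z y"
  using assms unfolding bilinear_on_def by blast+

lemma bl_zero:
  assumes "bilinear_on scale V eta" "z \<in> V" "0 \<in> V"
  shows "eta 0 z = 0" "eta z 0 = 0"
  using bl_lin[OF assms(1) assms(3) assms(3) assms(2), of 1] by simp_all

lemma bl_add:
  assumes "bilinear_on scale V eta" "x \<in> V" "y \<in> V" "z \<in> V"
  shows "eta (x + y) z = eta x z + eta y z" "eta z (x + y) = eta z x + eta z y"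
  using bl_lin[OF assms, of 1] by simp_all

lemma bl_neg:
  assumes "bilinear_on scale V eta" "x \<in> V" "z \<in> V" "0 \<in> V"
  shows "eta (- x) z = - eta x z" "eta z (- x) = - eta z x"
  using bl_lin[OF assms(1) assms(2) assms(4) assms(3), of "-1"] bl_zero[OF assms(1) assms(3) assms(4)]
  by (simp_all add: V.scale_minus_left)

lemma FF_cong:
  assumes F: "formal_frobenius scale V eta Y"
    and ee: "\<forall>x\<in>V. \<forall>y\<in>V. eta' x y = eta x y"
    and yy: "\<forall>xs. set xs \<subseteq> V \<longrightarrow> Y' xs = Y xs"
  shows "formal_frobenius scale V eta' Y'"
proof -
  have sV: "V.subspace V" and fd: "fin_dim_on scale V" and bl: "bilinear_on scale V eta"
    and sy: "\<forall>x\<in>V. \<forall>y\<in>V. eta x y = eta y x"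
    and nd: "\<forall>x\<in>V. (\<forall>y\<in>V. eta x y = 0) \<longrightarrow> x = 0"
    and l3: "\<forall>xs. set xs \<subseteq> V \<longrightarrow> length xs < 3 \<longrightarrow> Y xs = 0"
    and ml: "multilinear_on scale V Y" and sm: "symmetric_on V Y"
    and WF: "WDVV_on scale V eta Y"
    using F unfolding formal_frobenius_def by blast+
  have cl: "\<And>a x y. x \<in> V \<Longrightarrow> y \<in> V \<Longrightarrow> scale a x + y \<in> V"
    using sV by (auto intro!: V.subspace_add V.subspace_scale)
  have db: "\<And>bs bs'. dual_bases scale V eta' bs bs' = dual_bases scale V eta bs bs'"
  proof -
    fix bs bs'
    have "set bs \<subseteq> V \<Longrightarrow> set bs' \<subseteq> V \<Longrightarrow> length bs' = length bs \<Longrightarrow>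
      (\<forall>i<length bs. \<forall>j<length bs. eta' (bs ! i) (bs' ! j) = eta (bs ! i) (bs' ! j))"
      using ee by (metis nth_mem subsetD)
    then show "dual_bases scale V eta' bs bs' = dual_bases scale V eta bs bs'"
      unfolding dual_bases_def by (smt (verit))
  qed
  have "bilinear_on scale V eta'" unfolding bilinear_on_def
  proof (intro allI impI)
    fix a x y z assume m: "x \<in> V" "y \<in> V" "z \<in> V"
    show "eta' (scale a x + y) z = a * eta' x z + eta' y z \<and> eta' z (scale a x + y) = a * eta' z x + eta' z y"
      using bl_lin[OF bl m, of a] ee m cl[OF m(1,2), of a] by simp
  qed
  moreover have "multilinear_on scale V Y'" unfolding multilinear_on_def
  proof (intro allI impI)
    fix xs ys a x y assume m: "set xs \<subseteq> V" "set ys \<subseteq> V" "x \<in> V" "y \<in> V"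
    show "Y' (xs @ (scale a x + y) # ys) = a * Y' (xs @ x # ys) + Y' (xs @ y # ys)"
      using ml[unfolded multilinear_on_def, rule_format, OF m, of a] yy m cl[OF m(3,4), of a] by simp
  qed
  moreover have "symmetric_on V Y'" unfolding symmetric_on_def
  proof (intro allI impI)
    fix xs ys x y assume m: "set xs \<subseteq> V" "set ys \<subseteq> V" "x \<in> V" "y \<in> V"
    show "Y' (xs @ x # y # ys) = Y' (xs @ y # x # ys)"
      using sm[unfolded symmetric_on_def, rule_format, OF m] yy m by simp
  qed
  moreover have "WDVV_on scale V eta' Y'"
    unfolding WDVV_on_def db
  proof (intro allI impI)
    fix bs bs' a b c d xs
    assume D: "dual_bases scale V eta bs bs'" and m: "a \<in> V" "b \<in> V" "c \<in> V" "d \<in> V" "set xs \<subseteq> V"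
    have bsV: "\<And>j. j < length bs \<Longrightarrow> bs ! j \<in> V \<and> bs' ! j \<in> V"
      using D unfolding dual_bases_def by (metis nth_mem subsetD)
    have nV: "\<And>S. set (nths xs S) \<subseteq> V" by (meson m(5) set_nths_subset order_trans)
    have W: "(\<Sum>S\<in>Pow {..<length xs}. \<Sum>j<length bs.
              Y (a # b # bs ! j # nths xs S) * Y (bs' ! j # c # d # nths xs (- S)))
        = (\<Sum>S\<in>Pow {..<length xs}. \<Sum>j<length bs.
              Y (a # c # bs ! j # nths xs S) * Y (bs' ! j # b # d # nths xs (- S)))"
      using WF[unfolded WDVV_on_def, rule_format, OF D m] .
    have e: "\<And>S j u w. j < length bs \<Longrightarrow> u \<in> V \<Longrightarrow> w \<in> V \<Longrightarrow>
       Y' (a # u # bs ! j # nths xs S) * Y' (bs' ! j # w # d # nths xs (- S))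
     = Y (a # u # bs ! j # nths xs S) * Y (bs' ! j # w # d # nths xs (- S))"
    proof -
      fix S j u w assume j: "j < length bs" "u \<in> V" "w \<in> V"
      have n1: "set (nths xs S) \<subseteq> V" "set (nths xs (- S)) \<subseteq> V" by (rule nV)+
      have "set (a # u # bs ! j # nths xs S) \<subseteq> V" using bsV[OF j(1)] j m n1 by simp
      moreover have "set (bs' ! j # w # d # nths xs (- S)) \<subseteq> V" using bsV[OF j(1)] j m n1 by simp
      ultimately show "Y' (a # u # bs ! j # nths xs S) * Y' (bs' ! j # w # d # nths xs (- S))
     = Y (a # u # bs ! j # nths xs S) * Y (bs' ! j # w # d # nths xs (- S))" using yy by simp
    qed
    show "(\<Sum>S\<in>Pow {..<length xs}. \<Sum>j<length bs.
              Y' (a # b # bs ! j # nths xs S) * Y' (bs' ! j # c # d # nths xs (- S)))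
        = (\<Sum>S\<in>Pow {..<length xs}. \<Sum>j<length bs.
              Y' (a # c # bs ! j # nths xs S) * Y' (bs' ! j # b # d # nths xs (- S)))"
      using W e m by simp
  qed
  moreover have "\<forall>x\<in>V. \<forall>y\<in>V. eta' x y = eta' y x" using sy ee by simp
  moreover have "\<forall>x\<in>V. (\<forall>y\<in>V. eta' x y = 0) \<longrightarrow> x = 0" using nd ee by simp
  moreover have "\<forall>xs. set xs \<subseteq> V \<longrightarrow> length xs < 3 \<longrightarrow> Y' xs = 0" using l3 yy by simp
  ultimately show ?thesis using sV fd unfolding formal_frobenius_def by blast
qed

end

lemma kz: "(y::'k::field_char_0) = - y \<Longrightarrow> y = 0"
proof -
  assume h: "y = - y"
  have "y + y = 0" using h eq_neg_iff_add_eq_0 by blast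
  then have "2 * y = 0" by (simp only: mult_2)
  then show "y = 0" by simp
qed

context
  fixes scale :: "'k::field_char_0 \<Rightarrow> 'v::ab_group_add \<Rightarrow> 'v"
  assumes vs: "vector_space scale"
begin
interpretation V: vector_space scale by (rule vs)
lemma vz: "(x::'v) + x = 0 \<Longrightarrow> x = 0"
proof -
  assume h: "x + x = 0"
  have "scale (1 + 1) x = x + x" by (simp only: V.scale_left_distrib V.scale_one)
  then have "scale (1 + 1) x = 0" using h by (simp only:)
  then show "x = 0" by simp
qed

lemma lin_rho:
  assumes "Vector_Spaces.linear scale scale rho"
  shows "rho (x + y) = rho x + rho y" "rho (scale k x) = scale k (rho x)" "rho 0 = 0"
    "rho (- x) = - rho x" "rho (x - y) = rho x - rho y"
proof -
  have L: "(\<forall>x y. rho (x + y) = rho x + rho y) \<and> (\<forall>c x. rho (scale c x) = scale c (rho x))"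
    using assms by (simp add: Vector_Spaces.linear_iff)
  have ad: "\<And>x y. rho (x + y) = rho x + rho y" using L by blast
  have sc: "\<And>k x. rho (scale k x) = scale k (rho x)" using L by blast
  show "rho (x + y) = rho x + rho y" "rho (scale k x) = scale k (rho x)" by (rule ad, rule sc)
  show z: "rho 0 = 0" using sc[of 0 0] by simp
  have ng: "\<And>x. rho (- x) = - rho x" using ad z by (metis add.right_inverse add_eq_0_iff)
  show "rho (- x) = - rho x" by (rule ng)
  show "rho (x - y) = rho x - rho y" using ad[of x "- y"] ng[of y] by simp
qed

lemma twice: "(x::'v) + x = scale (1 + 1) x"
  by (simp only: V.scale_left_distrib V.scale_one)

lemma pre_dir:
  assumes P: "pre_Z2_frobenius scale He Hg rho eta Y"
  defines "A \<equiv> He \<inter> fixed_space rho" and "B \<equiv> {x\<in>He. rho x = - x}"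
  shows "direct3 scale A B Hg \<and> He = set_plus A B \<and> fixed_space rho = set_plus A Hg"
proof -
  have sE: "V.subspace He" and sG: "V.subspace Hg" and EG: "He \<inter> Hg = {0}"
    and sp: "\<forall>x. \<exists>a\<in>He. \<exists>b\<in>Hg. x = a + b" and lin: "Vector_Spaces.linear scale scale rho"
    and rr: "\<forall>x. rho (rho x) = x" and rE: "rho ` He \<subseteq> He" and rG: "\<forall>x\<in>Hg. rho x = x"
    using P unfolding pre_Z2_frobenius_def by blast+
  note L = lin_rho[OF lin]
  have sA: "V.subspace A" unfolding A_def fixed_space_def V.subspace_def
    using sE L by (auto intro: V.subspace_0 V.subspace_add V.subspace_scale)
  have sB: "V.subspace B" unfolding B_def V.subspace_def
    using sE L by (auto intro: V.subspace_0 V.subspace_add V.subspace_scale)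
  have AE: "A \<subseteq> He" "B \<subseteq> He" unfolding A_def B_def by auto
  have half: "\<And>x. x \<in> He \<Longrightarrow> \<exists>a\<in>A. \<exists>b\<in>B. x = a + b"
  proof -
    fix x assume x: "x \<in> He"
    let ?a = "scale (1/2) (x + rho x)" and ?b = "scale (1/2) (x - rho x)"
    have rx: "rho x \<in> He" using rE x by blast
    have "?a + ?b = scale (1/2) ((x + rho x) + (x - rho x))" by (simp only: V.scale_right_distrib)
    also have "(x + rho x) + (x - rho x) = x + x" by (simp add: algebra_simps)
    also have "x + x = scale (1 + 1) x" by (rule twice)
    also have "scale (1/2) (scale (1 + 1) x) = x" by simp
    finally have e: "x = ?a + ?b" by simp
    have "rho ?a = ?a" using L rr by (simp add: add.commute)
    moreover have "?a \<in> He" using sE x rx by (auto intro: V.subspace_add V.subspace_scale)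
    ultimately have a: "?a \<in> A" unfolding A_def fixed_space_def by simp
    have "rho ?b = scale (1/2) (rho x - x)" using L rr by simp
    also have "\<dots> = - ?b" by (metis L(4) V.scale_minus_right minus_diff_eq)
    finally have "rho ?b = - ?b" .
    moreover have "?b \<in> He" using sE x rx by (auto intro: V.subspace_diff V.subspace_scale)
    ultimately have b: "?b \<in> B" unfolding B_def by simp
    show "\<exists>a\<in>A. \<exists>b\<in>B. x = a + b" using a b e by blast
  qed
  have uq: "\<forall>a b c. a \<in> A \<longrightarrow> b \<in> B \<longrightarrow> c \<in> Hg \<longrightarrow> a + b + c = 0 \<longrightarrow> a = 0 \<and> b = 0 \<and> c = 0"
  proof (intro allI impI)
    fix a b c assume m: "a \<in> A" "b \<in> B" "c \<in> Hg" "a + b + c = 0"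
    have ab: "a + b \<in> He" using m AE sE by (auto intro: V.subspace_add)
    have "c = - (a + b)" using m(4) by (metis add.commute add_eq_0_iff)
    then have "c \<in> He" using ab sE V.subspace_neg by metis
    then have c0: "c = 0" using EG m(3) by blast
    then have ab0: "a + b = 0" using m by simp
    have ra: "rho a = a" and rb: "rho b = - b" using m unfolding A_def B_def fixed_space_def by auto
    have "rho (a + b) = a - b" using ra rb L(1) by simp
    then have "a - b = 0" using ab0 L by simp
    then have "a = b" by simp
    then have "a + a = 0" using ab0 by simp
    then have "a = 0" by (rule vz)
    then show "a = 0 \<and> b = 0 \<and> c = 0" using ab0 c0 by simp
  qed
  have ex: "\<forall>x. \<exists>a\<in>A. \<exists>b\<in>B. \<exists>c\<in>Hg. x = a + b + c"
  proof
    fix x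
    obtain e g where eg: "e \<in> He" "g \<in> Hg" "x = e + g" using sp by blast
    moreover obtain a b where "a \<in> A" "b \<in> B" "e = a + b" using half[OF eg(1)] by blast
    ultimately show "\<exists>a\<in>A. \<exists>b\<in>B. \<exists>c\<in>Hg. x = a + b + c" by blast
  qed
  have d: "direct3 scale A B Hg" unfolding direct3_def using sA sB sG uq ex by blast
  have e1: "He = set_plus A B"
  proof
    show "He \<subseteq> set_plus A B" unfolding set_plus_def using half by blast
    show "set_plus A B \<subseteq> He" unfolding set_plus_def using AE sE by (auto intro: V.subspace_add)
  qed
  have e2: "fixed_space rho = set_plus A Hg"
  proof
    show "fixed_space rho \<subseteq> set_plus A Hg"
    proof
      fix x assume x: "x \<in> fixed_space rho"
      obtain e g where eg: "e \<in> He" "g \<in> Hg" "x = e + g" using sp by blast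
      have "rho e + g = e + g" using x eg rG L unfolding fixed_space_def by simp
      then have "e \<in> A" using eg unfolding A_def fixed_space_def by simp
      then show "x \<in> set_plus A Hg" unfolding set_plus_def using eg by blast
    qed
    show "set_plus A Hg \<subseteq> fixed_space rho"
      unfolding set_plus_def A_def fixed_space_def using rG L by auto
  qed
  show ?thesis using d e1 e2 by blast
qed

lemma pre_facts:
  assumes P: "pre_Z2_frobenius scale He Hg rho eta Y"
  shows "multilinear_on scale UNIV Y" "braid_invariant He Hg rho Y"
    "\<forall>x. \<exists>a\<in>He. \<exists>b\<in>Hg. x = a + b" "\<forall>x\<in>Hg. rho x = x" "He \<inter> Hg = {0}"
    "Vector_Spaces.linear scale scale rho"
  using P unfolding pre_Z2_frobenius_def by blast+

lemma Y_comm: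
  assumes P: "pre_Z2_frobenius scale He Hg rho eta Y" and x: "x \<in> Hg"
  shows "Y (zs @ y # x # ws) = Y (zs @ x # y # ws)"
proof -
  note F = pre_facts[OF P]
  obtain a b where ab: "a \<in> He" "b \<in> Hg" "y = a + b" using F(3) by blast
  have "Y (zs @ y # x # ws) = Y (zs @ a # x # ws) + Y (zs @ b # x # ws)"
    unfolding ab(3) by (rule ml_add[OF vs F(1)]) auto
  also have "Y (zs @ a # x # ws) = Y (zs @ x # a # ws)"
    using F(2) ab(1) unfolding braid_invariant_def by blast
  also have "Y (zs @ b # x # ws) = Y (zs @ rho x # b # ws)"
    using F(2) ab(2) unfolding braid_invariant_def by blast
  also have "rho x = x" using F(4) x by blast
  also have "Y (zs @ x # a # ws) + Y (zs @ x # b # ws) = Y ((zs @ [x]) @ (a + b) # ws)"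
    using ml_add[OF vs F(1), of "zs @ [x]" ws a b] by simp
  finally show ?thesis using ab(3) by simp
qed

lemma Y_front:
  assumes P: "pre_Z2_frobenius scale He Hg rho eta Y" and x: "x \<in> Hg"
  shows "Y (pre @ zs @ x # ws) = Y (pre @ x # zs @ ws)"
proof (induction zs arbitrary: ws rule: rev_induct)
  case Nil
  then show ?case by simp
next
  case (snoc z zs)
  have "Y (pre @ (zs @ [z]) @ x # ws) = Y ((pre @ zs) @ z # x # ws)" by simp
  also have "\<dots> = Y ((pre @ zs) @ x # z # ws)" by (rule Y_comm[OF P x])
  also have "\<dots> = Y (pre @ zs @ x # (z # ws))" by simp
  also have "\<dots> = Y (pre @ x # zs @ z # ws)" by (rule snoc.IH)
  finally show ?case by simp
qed

lemma Y_rho: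
  assumes P: "pre_Z2_frobenius scale He Hg rho eta Y" and x: "x \<in> Hg"
  shows "Y (x # zs @ y # ws) = Y (x # zs @ rho y # ws)"
proof -
  note F = pre_facts[OF P]
  have "Y (x # zs @ y # ws) = Y ([] @ zs @ x # y # ws)" using Y_front[OF P x, of "[]" zs "y # ws"] by simp
  also have "\<dots> = Y (zs @ rho y # x # ws)" using F(2) x unfolding braid_invariant_def by simp
  also have "\<dots> = Y ([] @ (zs @ [rho y]) @ x # ws)" by simp
  also have "\<dots> = Y (x # zs @ rho y # ws)" using Y_front[OF P x, of "[]" "zs @ [rho y]" ws] by simp
  finally show ?thesis .
qed

lemma Y_mixed:
  assumes P: "pre_Z2_frobenius scale He Hg rho eta Y"
    and x: "x \<in> set L" "x \<in> Hg" and v: "v \<in> set L" "v \<in> He" "rho v = - v"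
  shows "Y L = 0"
proof (cases "v = x")
  case True
  then have "v = 0" using pre_facts(5)[OF P] v x by blast
  then obtain p q where "L = p @ 0 # q" using v(1) by (metis split_list)
  then show ?thesis using ml_zero[OF vs pre_facts(1)[OF P]] by simp
next
  case False
  obtain p q where L: "L = p @ x # q" using x(1) by (metis split_list)
  have "v \<in> set (p @ q)" using v(1) False L by auto
  then obtain r s where rs: "p @ q = r @ v # s" by (metis split_list)
  have "Y L = Y ([] @ p @ x # q)" using L by simp
  also have "\<dots> = Y (x # r @ v # s)" using Y_front[OF P x(2), of "[]" p q] rs by simp
  finally have e: "Y L = Y (x # r @ v # s)" .
  have "Y (x # r @ v # s) = Y (x # r @ rho v # s)" by (rule Y_rho[OF P x(2)])
  also have "\<dots> = Y ((x # r) @ (- v) # s)" using v(3) by simp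
  also have "\<dots> = - Y ((x # r) @ v # s)" by (rule ml_neg[OF vs pre_facts(1)[OF P]]) auto
  finally have "Y (x # r @ v # s) = - Y (x # r @ v # s)" by simp
  then show ?thesis using e kz by metis
qed

lemma Y_A:
  assumes P: "pre_Z2_frobenius scale He Hg rho eta Y" and d: "direct3 scale A B Hg"
    and hB: "\<forall>b\<in>B. b \<in> He \<and> rho b = - b"
    and u: "u \<in> set ps" "u \<in> B"
  shows "Y (ps @ xs) = Y (ps @ map (\<lambda>x. pr1 A B Hg x + pr2 A B Hg x) xs)"
  using u
proof (induction xs arbitrary: ps)
  case Nil
  then show ?case by simp
next
  case (Cons x xs)
  note D = d3_decomp[OF vs d, of x]
  have e: "(pr1 A B Hg x + pr2 A B Hg x) + pr3 A B Hg x = x" using D by simp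
  have "Y (ps @ x # xs) = Y (ps @ ((pr1 A B Hg x + pr2 A B Hg x) + pr3 A B Hg x) # xs)"
    by (simp only: e)
  also have "\<dots> = Y (ps @ (pr1 A B Hg x + pr2 A B Hg x) # xs) + Y (ps @ pr3 A B Hg x # xs)"
    by (rule ml_add[OF vs pre_facts(1)[OF P]]) auto
  also have "Y (ps @ pr3 A B Hg x # xs) = 0"
    by (rule Y_mixed[OF P, of "pr3 A B Hg x" _ u]) (use D Cons.prems hB in auto)
  also have "Y (ps @ (pr1 A B Hg x + pr2 A B Hg x) # xs) = Y ((ps @ [pr1 A B Hg x + pr2 A B Hg x]) @ xs)"
    by simp
  also have "\<dots> = Y ((ps @ [pr1 A B Hg x + pr2 A B Hg x]) @ map (\<lambda>x. pr1 A B Hg x + pr2 A B Hg x) xs)"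
    by (rule Cons.IH) (use Cons.prems in auto)
  finally show ?case by simp
qed

lemma Y_B:
  assumes P: "pre_Z2_frobenius scale He Hg rho eta Y" and d: "direct3 scale A B Hg"
    and hB: "\<forall>b\<in>B. b \<in> He \<and> rho b = - b"
    and u: "u \<in> set ps" "u \<in> Hg"
  shows "Y (ps @ xs) = Y (ps @ map (\<lambda>x. pr1 A B Hg x + pr3 A B Hg x) xs)"
  using u
proof (induction xs arbitrary: ps)
  case Nil
  then show ?case by simp
next
  case (Cons x xs)
  note D = d3_decomp[OF vs d, of x]
  have e: "(pr1 A B Hg x + pr3 A B Hg x) + pr2 A B Hg x = x" using D by (simp add: algebra_simps)
  have "Y (ps @ x # xs) = Y (ps @ ((pr1 A B Hg x + pr3 A B Hg x) + pr2 A B Hg x) # xs)"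
    by (simp only: e)
  also have "\<dots> = Y (ps @ (pr1 A B Hg x + pr3 A B Hg x) # xs) + Y (ps @ pr2 A B Hg x # xs)"
    by (rule ml_add[OF vs pre_facts(1)[OF P]]) auto
  also have "Y (ps @ pr2 A B Hg x # xs) = 0"
    by (rule Y_mixed[OF P, of u _ "pr2 A B Hg x"]) (use D Cons.prems hB in auto)
  also have "Y (ps @ (pr1 A B Hg x + pr3 A B Hg x) # xs) = Y ((ps @ [pr1 A B Hg x + pr3 A B Hg x]) @ xs)"
    by simp
  also have "\<dots> = Y ((ps @ [pr1 A B Hg x + pr3 A B Hg x]) @ map (\<lambda>x. pr1 A B Hg x + pr3 A B Hg x) xs)"
    by (rule Cons.IH) (use Cons.prems in auto)
  finally show ?case by simp
qed

lemma Y_C: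
  assumes P: "pre_Z2_frobenius scale He Hg rho eta Y" and d: "direct3 scale A B Hg"
    and hB: "\<forall>b\<in>B. b \<in> He \<and> rho b = - b"
  shows "Y (ps @ xs) = Y (ps @ map (\<lambda>x. pr1 A B Hg x + pr2 A B Hg x) xs)
     + Y (ps @ map (\<lambda>x. pr1 A B Hg x + pr3 A B Hg x) xs) - Y (ps @ map (pr1 A B Hg) xs)"
proof (induction xs arbitrary: ps)
  case Nil
  then show ?case by simp
next
  case (Cons x xs)
  note D = d3_decomp[OF vs d, of x]
  note MLA = ml_add[OF vs pre_facts(1)[OF P], simplified]
  let ?p1 = "pr1 A B Hg x" and ?p2 = "pr2 A B Hg x" and ?p3 = "pr3 A B Hg x"
  let ?L12 = "map (\<lambda>x. pr1 A B Hg x + pr2 A B Hg x) xs"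
  let ?L13 = "map (\<lambda>x. pr1 A B Hg x + pr3 A B Hg x) xs"
  let ?L1 = "map (pr1 A B Hg) xs"
  have e: "?p1 + ?p2 + ?p3 = x" using D by simp
  have "Y (ps @ x # xs) = Y (ps @ (?p1 + ?p2 + ?p3) # xs)" by (simp only: e)
  also have "\<dots> = Y (ps @ ?p1 # xs) + Y (ps @ ?p2 # xs) + Y (ps @ ?p3 # xs)" by (simp only: MLA)
  finally have s1: "Y (ps @ x # xs) = Y (ps @ ?p1 # xs) + Y (ps @ ?p2 # xs) + Y (ps @ ?p3 # xs)" .
  have i1: "Y (ps @ ?p1 # xs) = Y (ps @ ?p1 # ?L12) + Y (ps @ ?p1 # ?L13) - Y (ps @ ?p1 # ?L1)"
    using Cons.IH[of "ps @ [?p1]"] by simp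
  have i2: "Y (ps @ ?p2 # xs) = Y (ps @ ?p2 # ?L12)"
    using Y_A[OF P d hB, of ?p2 "ps @ [?p2]" xs] D by simp
  have i3: "Y (ps @ ?p3 # xs) = Y (ps @ ?p3 # ?L13)"
    using Y_B[OF P d hB, of ?p3 "ps @ [?p3]" xs] D by simp
  have r: "Y (ps @ (?p1 + ?p2) # ?L12) = Y (ps @ ?p1 # ?L12) + Y (ps @ ?p2 # ?L12)"
    "Y (ps @ (?p1 + ?p3) # ?L13) = Y (ps @ ?p1 # ?L13) + Y (ps @ ?p3 # ?L13)"
    by (simp_all only: MLA)
  show ?case using s1 i1 i2 i3 r by simp
qed

lemma d3_proj:
  assumes d: "direct3 scale A B C"
  shows "a \<in> A \<Longrightarrow> pr1 A B C a = a \<and> pr2 A B C a = 0 \<and> pr3 A B C a = 0"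
    "b \<in> B \<Longrightarrow> pr1 A B C b = 0 \<and> pr2 A B C b = b \<and> pr3 A B C b = 0"
    "c \<in> C \<Longrightarrow> pr1 A B C c = 0 \<and> pr2 A B C c = 0 \<and> pr3 A B C c = c"
proof -
  have z: "0 \<in> A" "0 \<in> B" "0 \<in> C" using d unfolding direct3_def by (auto intro: V.subspace_0)
  show "a \<in> A \<Longrightarrow> pr1 A B C a = a \<and> pr2 A B C a = 0 \<and> pr3 A B C a = 0"
    using d3_pr[OF vs d _ z(2) z(3), of a] by simp
  show "b \<in> B \<Longrightarrow> pr1 A B C b = 0 \<and> pr2 A B C b = b \<and> pr3 A B C b = 0"
    using d3_pr[OF vs d z(1) _ z(3), of b] by simp
  show "c \<in> C \<Longrightarrow> pr1 A B C c = 0 \<and> pr2 A B C c = 0 \<and> pr3 A B C c = c"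
    using d3_pr[OF vs d z(1) z(2), of c] by simp
qed

lemma bl3:
  assumes "bilinear_on scale UNIV eta"
  shows "eta (a + b + c) (a' + b' + c') =
     eta a a' + eta a b' + eta a c' + eta b a' + eta b b' + eta b c' + eta c a' + eta c b' + eta c c'"
  using bl_add[OF vs assms] by (simp add: algebra_simps)

lemma bl2:
  assumes "bilinear_on scale UNIV eta"
  shows "eta (a + b) (a' + b') = eta a a' + eta a b' + eta b a' + eta b b'"
  using bl_add[OF vs assms] by (simp add: algebra_simps)

lemma Yglue_eq:
  fixes Y :: "'v list \<Rightarrow> 'k"
  shows "Y_glue A B C Y Y xs = Y (map (\<lambda>x. pr1 A B C x + pr2 A B C x) xs)
     + Y (map (\<lambda>x. pr1 A B C x + pr3 A B C x) xs) - Y (map (pr1 A B C) xs)"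
  unfolding Y_glue_def Y_i_def Y_v_def Y_g_def by (simp add: algebra_simps)

lemma part2:
  assumes P: "pre_Z2_frobenius scale He Hg rho eta Y"
  defines "A \<equiv> He \<inter> fixed_space rho" and "B \<equiv> {x\<in>He. rho x = - x}"
  shows "direct3 scale A B Hg \<and>
       He = set_plus A B \<and>
       fixed_space rho = set_plus A Hg \<and>
       G_degree_e He Hg (Y_glue A B Hg Y Y) \<and>
       hom2 (pr1 A B Hg) (eta_i A B Hg eta) \<and>
       hom2 (pr2 A B Hg) (eta_v A B Hg eta) \<and>
       hom2 (pr3 A B Hg) (eta_g A B Hg eta eta) \<and>
       eta = eta_glue A B Hg eta eta \<and>
       Y = Y_glue A B Hg Y Y"
proof -
  have PD: "direct3 scale A B Hg \<and> He = set_plus A B \<and> fixed_space rho = set_plus A Hg"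
    using pre_dir[OF P] unfolding A_def B_def by simp
  then have d: "direct3 scale A B Hg" by blast
  have hB: "\<forall>b\<in>B. b \<in> He \<and> rho b = - b" unfolding B_def by simp
  have YY: "Y = Y_glue A B Hg Y Y"
  proof
    fix xs show "Y xs = Y_glue A B Hg Y Y xs"
      unfolding Yglue_eq using Y_C[OF P d hB, of "[]" xs] by simp
  qed
  have GD: "G_degree_e He Hg Y" using P unfolding pre_Z2_frobenius_def by blast
  have bl: "bilinear_on scale UNIV eta" and sy: "\<forall>x y. eta x y = eta y x"
    and ri: "\<forall>x y. eta (rho x) (rho y) = eta x y" and eg: "\<forall>x\<in>He. \<forall>y\<in>Hg. eta x y = 0"
    using P unfolding pre_Z2_frobenius_def by blast+
  have z0: "\<And>z. eta 0 z = 0" "\<And>z. eta z 0 = 0" using bl_zero[OF vs bl] by auto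
  have ng: "\<And>x z. eta z (- x) = - eta z x" using bl_neg[OF vs bl] by auto
  have AE: "A \<subseteq> He" "B \<subseteq> He" unfolding A_def B_def by auto
  have zab: "\<And>a b. a \<in> A \<Longrightarrow> b \<in> B \<Longrightarrow> eta a b = 0 \<and> eta b a = 0"
  proof -
    fix a b assume ab: "a \<in> A" "b \<in> B"
    have "eta a b = eta (rho a) (rho b)" using ri by simp
    also have "\<dots> = eta a (- b)" using ab unfolding A_def B_def fixed_space_def by simp
    also have "\<dots> = - eta a b" by (rule ng)
    finally have "eta a b = 0" by (rule kz)
    then show "eta a b = 0 \<and> eta b a = 0" using sy by metis
  qed
  have zeg: "\<And>e g. e \<in> He \<Longrightarrow> g \<in> Hg \<Longrightarrow> eta e g = 0 \<and> eta g e = 0" using eg sy by metis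
  note D = d3_decomp[OF vs d]
  note PJ = d3_proj[OF d]
  have ev: "\<And>x y. eta_v A B Hg eta x y = eta (pr2 A B Hg x) (pr2 A B Hg y)"
  proof -
    fix x y
    have m: "pr1 A B Hg x \<in> A" "pr2 A B Hg y \<in> B" "pr1 A B Hg y \<in> A" "pr2 A B Hg x \<in> B"
      using D by blast+
    show "eta_v A B Hg eta x y = eta (pr2 A B Hg x) (pr2 A B Hg y)"
      unfolding eta_v_def eta_i_def bl2[OF bl] using zab[OF m(1,2)] zab[OF m(3,4)] by simp
  qed
  have eG: "\<And>x y. eta_g A B Hg eta eta x y = eta (pr3 A B Hg x) (pr3 A B Hg y)"
  proof -
    fix x y
    have m: "pr1 A B Hg x \<in> He" "pr3 A B Hg y \<in> Hg" "pr1 A B Hg y \<in> He" "pr3 A B Hg x \<in> Hg"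
      using D AE by blast+
    show "eta_g A B Hg eta eta x y = eta (pr3 A B Hg x) (pr3 A B Hg y)"
      unfolding eta_g_def eta_i_def bl2[OF bl] using zeg[OF m(1,2)] zeg[OF m(3,4)] by simp
  qed
  have h1: "hom2 (pr1 A B Hg) (eta_i A B Hg eta)"
    unfolding hom2_def eta_i_def using D PJ by simp
  have h2: "hom2 (pr2 A B Hg) (eta_v A B Hg eta)"
    unfolding hom2_def ev using D PJ by simp
  have h3: "hom2 (pr3 A B Hg) (eta_g A B Hg eta eta)"
    unfolding hom2_def eG using D PJ by simp
  have EE: "eta = eta_glue A B Hg eta eta"
  proof (intro ext)
    fix x y
    have x: "x = pr1 A B Hg x + pr2 A B Hg x + pr3 A B Hg x" and y: "y = pr1 A B Hg y + pr2 A B Hg y + pr3 A B Hg y"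
      using D by blast+
    have m: "pr1 A B Hg x \<in> A" "pr2 A B Hg x \<in> B" "pr3 A B Hg x \<in> Hg"
       "pr1 A B Hg y \<in> A" "pr2 A B Hg y \<in> B" "pr3 A B Hg y \<in> Hg" using D by blast+
    have "eta x y = eta (pr1 A B Hg x + pr2 A B Hg x + pr3 A B Hg x) (pr1 A B Hg y + pr2 A B Hg y + pr3 A B Hg y)"
      using x y by simp
    also have "\<dots> = eta (pr1 A B Hg x) (pr1 A B Hg y) + eta (pr2 A B Hg x) (pr2 A B Hg y) + eta (pr3 A B Hg x) (pr3 A B Hg y)"
    proof -
      have mE: "pr1 A B Hg x \<in> He" "pr2 A B Hg x \<in> He" "pr1 A B Hg y \<in> He" "pr2 A B Hg y \<in> He"
        using m AE by blast+
      show ?thesis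
        unfolding bl3[OF bl] using zab[OF m(1) m(5)] zab[OF m(4) m(2)]
        zeg[OF mE(1) m(6)] zeg[OF mE(3) m(3)] zeg[OF mE(2) m(6)] zeg[OF mE(4) m(3)]
        by simp
    qed
    also have "\<dots> = eta_glue A B Hg eta eta x y"
      unfolding eta_glue_def ev eG eta_i_def by simp
    finally show "eta x y = eta_glue A B Hg eta eta x y" .
  qed
  show ?thesis using PD GD YY h1 h2 h3 EE by simp
qed

lemma part3:
  assumes P: "pre_Z2_frobenius scale He Hg rho eta Y" and P': "pre_Z2_frobenius scale He Hg rho eta' Y'"
    and e1: "\<forall>x\<in>He. \<forall>y\<in>He. eta x y = eta' x y"
    and e2: "\<forall>x\<in>fixed_space rho. \<forall>y\<in>fixed_space rho. eta x y = eta' x y"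
    and y1: "\<forall>xs. set xs \<subseteq> He \<longrightarrow> Y xs = Y' xs"
    and y2: "\<forall>xs. set xs \<subseteq> fixed_space rho \<longrightarrow> Y xs = Y' xs"
  shows "eta = eta' \<and> Y = Y'"
proof -
  define A where "A = He \<inter> fixed_space rho"
  define B where "B = {x\<in>He. rho x = - x}"
  have R: "direct3 scale A B Hg \<and> He = set_plus A B \<and> fixed_space rho = set_plus A Hg \<and>
       eta = eta_glue A B Hg eta eta \<and> Y = Y_glue A B Hg Y Y"
    using part2[OF P] unfolding A_def B_def by blast
  have R': "eta' = eta_glue A B Hg eta' eta' \<and> Y' = Y_glue A B Hg Y' Y'"
    using part2[OF P'] unfolding A_def B_def by blast
  have d: "direct3 scale A B Hg" using R by blast
  note D = d3_decomp[OF vs d]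
  have z: "(0::'v) \<in> B" "(0::'v) \<in> Hg" using d unfolding direct3_def by (auto intro: V.subspace_0)
  have m12: "\<And>x. pr1 A B Hg x + pr2 A B Hg x \<in> He" using R D unfolding set_plus_def by blast
  have m13: "\<And>x. pr1 A B Hg x + pr3 A B Hg x \<in> fixed_space rho" using R D unfolding set_plus_def by blast
  have m1: "\<And>x. pr1 A B Hg x \<in> He"
  proof -
    fix x
    have "pr1 A B Hg x + 0 \<in> set_plus A B" using D z unfolding set_plus_def by blast
    then show "pr1 A B Hg x \<in> He" using R by simp
  qed
  have EE: "eta = eta'"
  proof (intro ext)
    fix x y
    have "eta_glue A B Hg eta eta x y = eta_glue A B Hg eta' eta' x y"
      unfolding eta_glue_def eta_i_def eta_v_def eta_g_def
      using e1 e2 m12 m13 m1 by simp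
    then show "eta x y = eta' x y" using R R' by simp
  qed
  have YY: "Y = Y'"
  proof
    fix xs
    have "Y_glue A B Hg Y Y xs = Y_glue A B Hg Y' Y' xs"
    proof -
      have "set (map (\<lambda>x. pr1 A B Hg x + pr2 A B Hg x) xs) \<subseteq> He" using m12 by auto
      moreover have "set (map (\<lambda>x. pr1 A B Hg x + pr3 A B Hg x) xs) \<subseteq> fixed_space rho" using m13 by auto
      moreover have "set (map (pr1 A B Hg) xs) \<subseteq> He" using m1 by auto
      ultimately have "Y (map (\<lambda>x. pr1 A B Hg x + pr2 A B Hg x) xs) = Y' (map (\<lambda>x. pr1 A B Hg x + pr2 A B Hg x) xs)"
          "Y (map (\<lambda>x. pr1 A B Hg x + pr3 A B Hg x) xs) = Y' (map (\<lambda>x. pr1 A B Hg x + pr3 A B Hg x) xs)"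
          "Y (map (pr1 A B Hg) xs) = Y' (map (pr1 A B Hg) xs)"
        using y1 y2 by blast+
      then show ?thesis unfolding Yglue_eq by simp
    qed
    then show "Y xs = Y' xs" using R R' by simp
  qed
  show ?thesis using EE YY by simp
qed

end

context
  fixes scale :: "'k::field_char_0 \<Rightarrow> 'v::ab_group_add \<Rightarrow> 'v"
  assumes vs: "vector_space scale"
begin
interpretation V: vector_space scale by (rule vs)

lemma Yglue_eq2:
  fixes Y_e Y_G :: "'v list \<Rightarrow> 'k"
  shows "Y_glue A B C Y_e Y_G xs = Y_e (map (\<lambda>x. pr1 A B C x + pr2 A B C x) xs)
     + Y_G (map (\<lambda>x. pr1 A B C x + pr3 A B C x) xs) - Y_e (map (pr1 A B C) xs)"
  unfolding Y_glue_def Y_i_def Y_v_def Y_g_def by (simp add: algebra_simps)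

lemma eglue_eq2:
  fixes eta_e eta_G :: "'v \<Rightarrow> 'v \<Rightarrow> 'k"
  shows "eta_glue A B C eta_e eta_G x y = eta_e (pr1 A B C x + pr2 A B C x) (pr1 A B C y + pr2 A B C y)
     + eta_G (pr1 A B C x + pr3 A B C x) (pr1 A B C y + pr3 A B C y) - eta_e (pr1 A B C x) (pr1 A B C y)"
  unfolding eta_glue_def eta_i_def eta_v_def eta_g_def by (simp add: algebra_simps)

lemma part1:
  assumes d: "direct3 scale A B C"
    and lin: "Vector_Spaces.linear scale scale rho"
    and rA: "\<forall>a\<in>A. rho a = a" and rB: "\<forall>b\<in>B. rho b = - b" and rC: "\<forall>c\<in>C. rho c = c"
    and FE: "formal_frobenius scale (set_plus A B) eta_e Y_e"
    and FG: "formal_frobenius scale (set_plus A C) eta_G Y_G"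
    and eA: "\<forall>x\<in>A. \<forall>y\<in>A. eta_e x y = eta_G x y"
    and yA: "\<forall>xs. set xs \<subseteq> A \<longrightarrow> Y_e xs = Y_G xs"
    and GD: "G_degree_e (set_plus A B) C (Y_glue A B C Y_e Y_G)"
    and h1: "hom2 (pr1 A B C) (eta_i A B C eta_e)"
    and h2: "hom2 (pr2 A B C) (eta_v A B C eta_e)"
    and h3: "hom2 (pr3 A B C) (eta_g A B C eta_e eta_G)"
  shows "pre_Z2_frobenius scale (set_plus A B) C rho
           (eta_glue A B C eta_e eta_G) (Y_glue A B C Y_e Y_G)"
proof -
  define E where "E = set_plus A B"
  define G where "G = set_plus A C"
  define p1 where "p1 = pr1 A B C"
  define p2 where "p2 = pr2 A B C"
  define p3 where "p3 = pr3 A B C"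
  define eta where "eta = eta_glue A B C eta_e eta_G"
  define Y where "Y = Y_glue A B C Y_e Y_G"
  have sA: "V.subspace A" and sB: "V.subspace B" and sC: "V.subspace C"
    using d unfolding direct3_def by blast+
  have z: "0 \<in> A" "0 \<in> B" "0 \<in> C" using sA sB sC by (auto intro: V.subspace_0)
  have sE: "V.subspace E" and fdE: "fin_dim_on scale E" and blE: "bilinear_on scale E eta_e"
    and syE: "\<forall>x\<in>E. \<forall>y\<in>E. eta_e x y = eta_e y x"
    and ndE: "\<forall>x\<in>E. (\<forall>y\<in>E. eta_e x y = 0) \<longrightarrow> x = 0"
    and l3E: "\<forall>xs. set xs \<subseteq> E \<longrightarrow> length xs < 3 \<longrightarrow> Y_e xs = 0"
    and mlE: "multilinear_on scale E Y_e" and smE: "symmetric_on E Y_e"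
    using FE unfolding formal_frobenius_def E_def by blast+
  have sG: "V.subspace G" and fdG: "fin_dim_on scale G" and blG: "bilinear_on scale G eta_G"
    and syG: "\<forall>x\<in>G. \<forall>y\<in>G. eta_G x y = eta_G y x"
    and ndG: "\<forall>x\<in>G. (\<forall>y\<in>G. eta_G x y = 0) \<longrightarrow> x = 0"
    and l3G: "\<forall>xs. set xs \<subseteq> G \<longrightarrow> length xs < 3 \<longrightarrow> Y_G xs = 0"
    and mlG: "multilinear_on scale G Y_G" and smG: "symmetric_on G Y_G"
    using FG unfolding formal_frobenius_def G_def by blast+
  note L = lin_rho[OF vs lin]
  have D: "\<And>x. x = p1 x + p2 x + p3 x \<and> p1 x \<in> A \<and> p2 x \<in> B \<and> p3 x \<in> C"
    unfolding p1_def p2_def p3_def by (rule d3_decomp[OF vs d])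
  have PR: "\<And>a b c. a \<in> A \<Longrightarrow> b \<in> B \<Longrightarrow> c \<in> C \<Longrightarrow> p1 (a + b + c) = a \<and> p2 (a + b + c) = b \<and> p3 (a + b + c) = c"
    unfolding p1_def p2_def p3_def using d3_pr[OF vs d] by blast
  have LIN: "\<And>k x y. p1 (scale k x + y) = scale k (p1 x) + p1 y \<and> p2 (scale k x + y) = scale k (p2 x) + p2 y
     \<and> p3 (scale k x + y) = scale k (p3 x) + p3 y"
    unfolding p1_def p2_def p3_def using d3_lin[OF vs d] by blast
  have inE: "\<And>a b. a \<in> A \<Longrightarrow> b \<in> B \<Longrightarrow> a + b \<in> E" unfolding E_def set_plus_def by blast
  have inG: "\<And>a c. a \<in> A \<Longrightarrow> c \<in> C \<Longrightarrow> a + c \<in> G" unfolding G_def set_plus_def by blast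
  have AE: "\<And>a. a \<in> A \<Longrightarrow> a \<in> E" using inE[OF _ z(2)] by simp
  have BE: "\<And>b. b \<in> B \<Longrightarrow> b \<in> E" using inE[OF z(1)] by simp
  have AG: "\<And>a. a \<in> A \<Longrightarrow> a \<in> G" using inG[OF _ z(3)] by simp
  have CG: "\<And>c. c \<in> C \<Longrightarrow> c \<in> G" using inG[OF z(1)] by simp
  have m12: "\<And>x. p1 x + p2 x \<in> E" using D inE by blast
  have m13: "\<And>x. p1 x + p3 x \<in> G" using D inG by blast
  have m1E: "\<And>x. p1 x \<in> E" using D AE by blast
  have m2E: "\<And>x. p2 x \<in> E" using D BE by blast
  have m1G: "\<And>x. p1 x \<in> G" using D AG by blast
  have m3G: "\<And>x. p3 x \<in> G" using D CG by blast
  have PE: "\<And>x. x \<in> E \<Longrightarrow> p1 x + p2 x = x \<and> p3 x = 0"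
  proof -
    fix x assume "x \<in> E"
    then obtain a b where ab: "a \<in> A" "b \<in> B" "x = a + b" unfolding E_def set_plus_def by blast
    then have "x = a + b + 0" by simp
    then show "p1 x + p2 x = x \<and> p3 x = 0" using PR[OF ab(1,2) z(3)] ab by simp
  qed
  have PG: "\<And>x. x \<in> G \<Longrightarrow> p1 x + p3 x = x \<and> p2 x = 0"
  proof -
    fix x assume "x \<in> G"
    then obtain a c where ac: "a \<in> A" "c \<in> C" "x = a + c" unfolding G_def set_plus_def by blast
    then have "x = a + 0 + c" by simp
    then show "p1 x + p3 x = x \<and> p2 x = 0" using PR[OF ac(1) z(2) ac(2)] ac by simp
  qed
  have PC: "\<And>x. x \<in> C \<Longrightarrow> p1 x = 0 \<and> p2 x = 0 \<and> p3 x = x"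
    using PR[OF z(1) z(2)] by (metis add_0)
  have PA: "\<And>x. x \<in> A \<Longrightarrow> p1 x = x \<and> p2 x = 0 \<and> p3 x = 0"
    using PR[OF _ z(2) z(3)] by (metis add_0_right)
  have PB: "\<And>x. x \<in> B \<Longrightarrow> p1 x = 0 \<and> p2 x = x \<and> p3 x = 0"
    using PR[OF z(1) _ z(3)] by (metis add_0 add_0_right)
  have etaF: "\<And>x y. eta x y = eta_e (p1 x + p2 x) (p1 y + p2 y) + eta_G (p1 x + p3 x) (p1 y + p3 y) - eta_e (p1 x) (p1 y)"
    unfolding eta_def p1_def p2_def p3_def by (rule eglue_eq2)
  have YF: "\<And>xs. Y xs = Y_e (map (\<lambda>x. p1 x + p2 x) xs) + Y_G (map (\<lambda>x. p1 x + p3 x) xs) - Y_e (map p1 xs)"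
    unfolding Y_def p1_def p2_def p3_def by (rule Yglue_eq2)
  have sm12: "\<And>xs. set (map (\<lambda>x. p1 x + p2 x) xs) \<subseteq> E" using m12 by auto
  have sm13: "\<And>xs. set (map (\<lambda>x. p1 x + p3 x) xs) \<subseteq> G" using m13 by auto
  have sm1: "\<And>xs. set (map p1 xs) \<subseteq> E" using m1E by auto
  have l12: "\<And>k x y. p1 (scale k x + y) + p2 (scale k x + y) = scale k (p1 x + p2 x) + (p1 y + p2 y)"
    using LIN by (simp add: V.scale_right_distrib algebra_simps)
  have l13: "\<And>k x y. p1 (scale k x + y) + p3 (scale k x + y) = scale k (p1 x + p3 x) + (p1 y + p3 y)"
    using LIN by (simp add: V.scale_right_distrib algebra_simps)
  have l1: "\<And>k x y. p1 (scale k x + y) = scale k (p1 x) + p1 y" using LIN by blast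
  have fin: "fin_dim_on scale UNIV"
  proof -
    obtain BE where BE: "finite BE" "BE \<subseteq> E" "V.span BE = E" using fdE unfolding fin_dim_on_def by blast
    obtain BG where BG: "finite BG" "BG \<subseteq> G" "V.span BG = G" using fdG unfolding fin_dim_on_def by blast
    have "V.span (BE \<union> BG) = UNIV"
    proof -
      have "\<And>v. v \<in> V.span (BE \<union> BG)"
      proof -
        fix v
        have "v = (p1 v + p2 v) + p3 v" using D[of v] by simp
        moreover have "p1 v + p2 v \<in> V.span BE" using BE m12 by simp
        moreover have "p3 v \<in> V.span BG" using BG m3G by simp
        ultimately show "v \<in> V.span (BE \<union> BG)" unfolding V.span_Un by blast
      qed
      then show ?thesis by blast
    qed
    then show ?thesis unfolding fin_dim_on_def using BE BG by blast
  qed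
  have EC: "E \<inter> C = {0}"
  proof
    show "E \<inter> C \<subseteq> {0}"
    proof
      fix x assume x: "x \<in> E \<inter> C"
      then have "p3 x = 0" "p3 x = x" using PE PC by blast+
      then show "x \<in> {0}" by simp
    qed
    show "{0} \<subseteq> E \<inter> C" using AE z by blast
  qed
  have spl: "\<forall>x. \<exists>a\<in>E. \<exists>b\<in>C. x = a + b"
  proof
    fix x show "\<exists>a\<in>E. \<exists>b\<in>C. x = a + b" using D[of x] m12[of x] by (metis add.assoc)
  qed
  have rx: "\<And>x. rho x = p1 x + - p2 x + p3 x"
  proof -
    fix x
    have e: "p1 x + p2 x + p3 x = x" using D[of x] by simp
    have "rho x = rho (p1 x + p2 x + p3 x)" by (simp only: e)
    also have "\<dots> = rho (p1 x) + rho (p2 x) + rho (p3 x)" by (simp only: L(1))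
    also have "\<dots> = p1 x + - p2 x + p3 x" using D[of x] rA rB rC by simp
    finally show "rho x = p1 x + - p2 x + p3 x" .
  qed
  have mB: "\<And>x. - p2 x \<in> B" using D sB V.subspace_neg by blast
  have prx: "\<And>x. p1 (rho x) = p1 x \<and> p2 (rho x) = - p2 x \<and> p3 (rho x) = p3 x"
    using rx PR D mB by metis
  have rr: "\<forall>x. rho (rho x) = x"
  proof
    fix x
    have "rho (rho x) = p1 (rho x) + - p2 (rho x) + p3 (rho x)" by (rule rx)
    also have "\<dots> = p1 x + p2 x + p3 x" using prx by simp
    also have "\<dots> = x" using D[of x] by simp
    finally show "rho (rho x) = x" .
  qed
  have rE: "rho ` E \<subseteq> E"
  proof
    fix y assume "y \<in> rho ` E"
    then obtain x where x: "x \<in> E" "y = rho x" by blast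
    have "y = p1 x + - p2 x" using rx[of x] PE[OF x(1)] x(2) by simp
    then show "y \<in> E" using inE D mB by metis
  qed
  have rCC: "rho ` C \<subseteq> C" using rC by auto
  have sm: "\<forall>x y. eta x y = eta y x" unfolding etaF using syE syG m12 m13 m1E by simp
  have bl: "bilinear_on scale UNIV eta" unfolding bilinear_on_def
  proof (intro allI impI conjI)
    fix k x y z
    have a1: "eta_e (scale k (p1 x + p2 x) + (p1 y + p2 y)) (p1 z + p2 z) = k * eta_e (p1 x + p2 x) (p1 z + p2 z) + eta_e (p1 y + p2 y) (p1 z + p2 z)"
      by (rule bl_lin(1)[OF vs blE m12 m12 m12])
    have a2: "eta_G (scale k (p1 x + p3 x) + (p1 y + p3 y)) (p1 z + p3 z) = k * eta_G (p1 x + p3 x) (p1 z + p3 z) + eta_G (p1 y + p3 y) (p1 z + p3 z)"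
      by (rule bl_lin(1)[OF vs blG m13 m13 m13])
    have a3: "eta_e (scale k (p1 x) + p1 y) (p1 z) = k * eta_e (p1 x) (p1 z) + eta_e (p1 y) (p1 z)"
      by (rule bl_lin(1)[OF vs blE m1E m1E m1E])
    show "eta (scale k x + y) z = k * eta x z + eta y z"
      unfolding etaF unfolding l12 l13 unfolding l1 a1 a2 a3 by (simp add: algebra_simps)
    have b1: "eta_e (p1 z + p2 z) (scale k (p1 x + p2 x) + (p1 y + p2 y)) = k * eta_e (p1 z + p2 z) (p1 x + p2 x) + eta_e (p1 z + p2 z) (p1 y + p2 y)"
      by (rule bl_lin(2)[OF vs blE m12 m12 m12])
    have b2: "eta_G (p1 z + p3 z) (scale k (p1 x + p3 x) + (p1 y + p3 y)) = k * eta_G (p1 z + p3 z) (p1 x + p3 x) + eta_G (p1 z + p3 z) (p1 y + p3 y)"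
      by (rule bl_lin(2)[OF vs blG m13 m13 m13])
    have b3: "eta_e (p1 z) (scale k (p1 x) + p1 y) = k * eta_e (p1 z) (p1 x) + eta_e (p1 z) (p1 y)"
      by (rule bl_lin(2)[OF vs blE m1E m1E m1E])
    show "eta z (scale k x + y) = k * eta z x + eta z y"
      unfolding etaF unfolding l12 l13 unfolding l1 b1 b2 b3 by (simp add: algebra_simps)
  qed
  have p0: "p1 0 = 0" "p2 0 = 0" "p3 0 = 0" using PA[OF z(1)] by auto
  have zE: "\<And>w. w \<in> E \<Longrightarrow> eta_e 0 w = 0 \<and> eta_e w 0 = 0" using bl_zero[OF vs blE] AE z(1) by blast
  have zG: "\<And>w. w \<in> G \<Longrightarrow> eta_G 0 w = 0 \<and> eta_G w 0 = 0" using bl_zero[OF vs blG] AG z(1) by blast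
  have cAB: "\<And>a b. a \<in> A \<Longrightarrow> b \<in> B \<Longrightarrow> eta_e a b = 0 \<and> eta_e b a = 0"
  proof -
    fix a b assume ab: "a \<in> A" "b \<in> B"
    have "eta_v A B C eta_e a b = eta_v A B C eta_e (p2 a) (p2 b)"
      using h2 unfolding hom2_def p2_def by blast
    then have "eta_e (p1 a + p2 a) (p1 b + p2 b) - eta_e (p1 a) (p1 b)
       = eta_e (p1 (p2 a) + p2 (p2 a)) (p1 (p2 b) + p2 (p2 b)) - eta_e (p1 (p2 a)) (p1 (p2 b))"
      unfolding eta_v_def eta_i_def p1_def p2_def .
    then have "eta_e a b - eta_e a 0 = eta_e 0 b - eta_e 0 0"
      using PA[OF ab(1)] PB[OF ab(2)] p0 by simp
    then have "eta_e a b = 0" using zE AE BE ab z(1) by simp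
    then show "eta_e a b = 0 \<and> eta_e b a = 0" using syE AE BE ab by metis
  qed
  have cAC: "\<And>a c. a \<in> A \<Longrightarrow> c \<in> C \<Longrightarrow> eta_G a c = 0 \<and> eta_G c a = 0"
  proof -
    fix a c assume ac: "a \<in> A" "c \<in> C"
    have "eta_g A B C eta_e eta_G a c = eta_g A B C eta_e eta_G (p3 a) (p3 c)"
      using h3 unfolding hom2_def p3_def by blast
    then have "eta_G (p1 a + p3 a) (p1 c + p3 c) - eta_e (p1 a) (p1 c)
       = eta_G (p1 (p3 a) + p3 (p3 a)) (p1 (p3 c) + p3 (p3 c)) - eta_e (p1 (p3 a)) (p1 (p3 c))"
      unfolding eta_g_def eta_i_def p1_def p3_def .
    then have "eta_G a c - eta_e a 0 = eta_G 0 c - eta_e 0 0"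
      using PA[OF ac(1)] PC[OF ac(2)] p0 by simp
    then have "eta_G a c = 0" using zE zG AE AG CG ac z(1) by simp
    then show "eta_G a c = 0 \<and> eta_G c a = 0" using syG AG CG ac by metis
  qed
  have DG: "\<And>x y. eta x y = eta_e (p1 x) (p1 y) + eta_e (p2 x) (p2 y) + eta_G (p3 x) (p3 y)"
  proof -
    fix x y
    have m: "p1 x \<in> A" "p2 x \<in> B" "p3 x \<in> C" "p1 y \<in> A" "p2 y \<in> B" "p3 y \<in> C" using D by blast+
    have e1: "eta_e (p1 x + p2 x) (p1 y + p2 y) = eta_e (p1 x) (p1 y) + eta_e (p1 x) (p2 y) + eta_e (p2 x) (p1 y) + eta_e (p2 x) (p2 y)"
      using bl_add[OF vs blE] m AE BE by (simp add: m12 m1E m2E)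
    have e2: "eta_G (p1 x + p3 x) (p1 y + p3 y) = eta_G (p1 x) (p1 y) + eta_G (p1 x) (p3 y) + eta_G (p3 x) (p1 y) + eta_G (p3 x) (p3 y)"
      using bl_add[OF vs blG] m AG CG by (simp add: m13 m1G m3G)
    have e3: "eta_G (p1 x) (p1 y) = eta_e (p1 x) (p1 y)" using eA m by simp
    show "eta x y = eta_e (p1 x) (p1 y) + eta_e (p2 x) (p2 y) + eta_G (p3 x) (p3 y)"
      unfolding etaF e1 e2 e3 using cAB[OF m(1) m(5)] cAB[OF m(4) m(2)] cAC[OF m(1) m(6)] cAC[OF m(4) m(3)]
      by simp
  qed
  have nd: "\<forall>x. (\<forall>y. eta x y = 0) \<longrightarrow> x = 0"
  proof (intro allI impI)
    fix x assume h: "\<forall>y. eta x y = 0"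
    have m: "p1 x \<in> A" "p2 x \<in> B" "p3 x \<in> C" using D by blast+
    have q1: "p1 x = 0"
    proof -
      have "\<forall>w\<in>E. eta_e (p1 x) w = 0"
      proof
        fix w assume w: "w \<in> E"
        have wm: "p1 w \<in> A" "p2 w \<in> B" using D by blast+
        have "eta_e (p1 x) w = eta_e (p1 x) (p1 w + p2 w)" using PE[OF w] by simp
        also have "\<dots> = eta_e (p1 x) (p1 w) + eta_e (p1 x) (p2 w)" using bl_add(2)[OF vs blE] m1E m2E by simp
        also have "eta_e (p1 x) (p2 w) = 0" using cAB[OF m(1) wm(2)] by simp
        also have "eta_e (p1 x) (p1 w) = eta x (p1 w)" unfolding DG using PA[OF wm(1)] zE zG m AE BE CG by simp
        finally show "eta_e (p1 x) w = 0" using h by simp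
      qed
      then show ?thesis using ndE m1E by blast
    qed
    have q2: "p2 x = 0"
    proof -
      have "\<forall>w\<in>E. eta_e (p2 x) w = 0"
      proof
        fix w assume w: "w \<in> E"
        have wm: "p1 w \<in> A" "p2 w \<in> B" using D by blast+
        have "eta_e (p2 x) w = eta_e (p2 x) (p1 w + p2 w)" using PE[OF w] by simp
        also have "\<dots> = eta_e (p2 x) (p1 w) + eta_e (p2 x) (p2 w)" using bl_add(2)[OF vs blE] m1E m2E by simp
        also have "eta_e (p2 x) (p1 w) = 0" using cAB[OF wm(1) m(2)] by simp
        also have "eta_e (p2 x) (p2 w) = eta x (p2 w)" unfolding DG using PB[OF wm(2)] zE zG m AE BE CG by simp
        finally show "eta_e (p2 x) w = 0" using h by simp
      qed
      then show ?thesis using ndE m2E by blast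
    qed
    have q3: "p3 x = 0"
    proof -
      have "\<forall>w\<in>G. eta_G (p3 x) w = 0"
      proof
        fix w assume w: "w \<in> G"
        have wm: "p1 w \<in> A" "p3 w \<in> C" using D by blast+
        have "eta_G (p3 x) w = eta_G (p3 x) (p1 w + p3 w)" using PG[OF w] by simp
        also have "\<dots> = eta_G (p3 x) (p1 w) + eta_G (p3 x) (p3 w)" using bl_add(2)[OF vs blG] m1G m3G by simp
        also have "eta_G (p3 x) (p1 w) = 0" using cAC[OF wm(1) m(3)] by simp
        also have "eta_G (p3 x) (p3 w) = eta x (p3 w)" unfolding DG using PC[OF wm(2)] zE zG m AE BE CG by simp
        finally show "eta_G (p3 x) w = 0" using h by simp
      qed
      then show ?thesis using ndG m3G by blast
    qed
    show "x = 0" using D[of x] q1 q2 q3 by simp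
  qed
  have ri: "\<forall>x y. eta (rho x) (rho y) = eta x y"
  proof (intro allI)
    fix x y
    have "eta_e (- p2 x) (- p2 y) = eta_e (p2 x) (p2 y)"
      using bl_neg[OF vs blE] m2E AE z(1) mB BE by simp
    then show "eta (rho x) (rho y) = eta x y" unfolding DG using prx by simp
  qed
  have orth: "\<forall>x\<in>E. \<forall>y\<in>C. eta x y = 0"
    unfolding DG using PE PC zE zG m1E m2E CG by simp
  have len3: "\<forall>xs. length xs < 3 \<longrightarrow> Y xs = 0"
  proof (intro allI impI)
    fix xs :: "'v list" assume l: "length xs < 3"
    show "Y xs = 0" unfolding YF using l3E l3G sm12 sm13 sm1 l by simp
  qed
  have ml: "multilinear_on scale UNIV Y" unfolding multilinear_on_def
  proof (intro allI impI)
    fix xs ys :: "'v list" and k x y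
    have c1: "Y_e (map (\<lambda>x. p1 x + p2 x) xs @ (scale k (p1 x + p2 x) + (p1 y + p2 y)) # map (\<lambda>x. p1 x + p2 x) ys)
      = k * Y_e (map (\<lambda>x. p1 x + p2 x) xs @ (p1 x + p2 x) # map (\<lambda>x. p1 x + p2 x) ys)
        + Y_e (map (\<lambda>x. p1 x + p2 x) xs @ (p1 y + p2 y) # map (\<lambda>x. p1 x + p2 x) ys)"
      using mlE[unfolded multilinear_on_def, rule_format, OF sm12 sm12 m12 m12] .
    have c2: "Y_G (map (\<lambda>x. p1 x + p3 x) xs @ (scale k (p1 x + p3 x) + (p1 y + p3 y)) # map (\<lambda>x. p1 x + p3 x) ys)
      = k * Y_G (map (\<lambda>x. p1 x + p3 x) xs @ (p1 x + p3 x) # map (\<lambda>x. p1 x + p3 x) ys)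
        + Y_G (map (\<lambda>x. p1 x + p3 x) xs @ (p1 y + p3 y) # map (\<lambda>x. p1 x + p3 x) ys)"
      using mlG[unfolded multilinear_on_def, rule_format, OF sm13 sm13 m13 m13] .
    have c3: "Y_e (map p1 xs @ (scale k (p1 x) + p1 y) # map p1 ys)
      = k * Y_e (map p1 xs @ p1 x # map p1 ys) + Y_e (map p1 xs @ p1 y # map p1 ys)"
      using mlE[unfolded multilinear_on_def, rule_format, OF sm1 sm1 m1E m1E] .
    show "Y (xs @ (scale k x + y) # ys) = k * Y (xs @ x # ys) + Y (xs @ y # ys)"
      unfolding YF map_append list.map unfolding l12 l13 unfolding l1 c1 c2 c3
      by (simp add: algebra_simps)
  qed
  have br: "braid_invariant E C rho Y" unfolding braid_invariant_def
  proof (intro allI conjI impI)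
    fix xs ys :: "'v list" and x y
    assume x: "x \<in> E"
    have s1: "Y_e (map (\<lambda>x. p1 x + p2 x) xs @ (p1 x + p2 x) # (p1 y + p2 y) # map (\<lambda>x. p1 x + p2 x) ys)
       = Y_e (map (\<lambda>x. p1 x + p2 x) xs @ (p1 y + p2 y) # (p1 x + p2 x) # map (\<lambda>x. p1 x + p2 x) ys)"
      using smE[unfolded symmetric_on_def, rule_format, OF sm12 sm12 m12 m12] .
    have s2: "Y_G (map (\<lambda>x. p1 x + p3 x) xs @ (p1 x + p3 x) # (p1 y + p3 y) # map (\<lambda>x. p1 x + p3 x) ys)
       = Y_G (map (\<lambda>x. p1 x + p3 x) xs @ (p1 y + p3 y) # (p1 x + p3 x) # map (\<lambda>x. p1 x + p3 x) ys)"
      using smG[unfolded symmetric_on_def, rule_format, OF sm13 sm13 m13 m13] .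
    have s3: "Y_e (map p1 xs @ p1 x # p1 y # map p1 ys) = Y_e (map p1 xs @ p1 y # p1 x # map p1 ys)"
      using smE[unfolded symmetric_on_def, rule_format, OF sm1 sm1 m1E m1E] .
    show "Y (xs @ x # y # ys) = Y (xs @ y # x # ys)"
      unfolding YF map_append list.map using s1 s2 s3 by simp
  next
    fix xs ys :: "'v list" and x y
    assume x: "x \<in> C"
    note px = PC[OF x]
    have z0: "(0::'v) \<in> E" using AE z(1) by blast
    have u1: "Y_e (map (\<lambda>x. p1 x + p2 x) xs @ 0 # (p1 y + p2 y) # map (\<lambda>x. p1 x + p2 x) ys) = 0"
      by (rule ml_zero[OF vs mlE]) (use sm12 m12 z0 in auto)
    have u2: "Y_e ((map (\<lambda>x. p1 x + p2 x) xs @ [p1 (rho y) + p2 (rho y)]) @ 0 # map (\<lambda>x. p1 x + p2 x) ys) = 0"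
      by (rule ml_zero[OF vs mlE]) (use sm12 m12 z0 in auto)
    have u3: "Y_e (map p1 xs @ 0 # p1 y # map p1 ys) = 0"
      by (rule ml_zero[OF vs mlE]) (use sm1 m1E z0 in auto)
    have u4: "Y_e ((map p1 xs @ [p1 (rho y)]) @ 0 # map p1 ys) = 0"
      by (rule ml_zero[OF vs mlE]) (use sm1 m1E z0 in auto)
    have s2: "Y_G (map (\<lambda>x. p1 x + p3 x) xs @ x # (p1 y + p3 y) # map (\<lambda>x. p1 x + p3 x) ys)
       = Y_G (map (\<lambda>x. p1 x + p3 x) xs @ (p1 y + p3 y) # x # map (\<lambda>x. p1 x + p3 x) ys)"
      using smG[unfolded symmetric_on_def, rule_format, OF sm13 sm13 CG[OF x] m13] .
    show "Y (xs @ x # y # ys) = Y (xs @ rho y # x # ys)"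
      unfolding YF map_append list.map using px prx[of y] u1 u2 u3 u4 s2 by simp
  qed
  have FE': "formal_frobenius scale E eta Y"
  proof (rule FF_cong[OF vs FE[folded E_def]])
    show "\<forall>x\<in>E. \<forall>y\<in>E. eta x y = eta_e x y"
    proof (intro ballI)
      fix x y assume xy: "x \<in> E" "y \<in> E"
      have "eta_G (p1 x) (p1 y) = eta_e (p1 x) (p1 y)" using eA D by simp
      then show "eta x y = eta_e x y" unfolding etaF using PE[OF xy(1)] PE[OF xy(2)] by simp
    qed
    show "\<forall>xs. set xs \<subseteq> E \<longrightarrow> Y xs = Y_e xs"
    proof (intro allI impI)
      fix xs :: "'v list" assume xs: "set xs \<subseteq> E"
      have mA: "map (\<lambda>x. p1 x + p2 x) xs = xs" using PE xs by (auto intro: map_idI)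
      have mB: "map (\<lambda>x. p1 x + p3 x) xs = map p1 xs" using PE xs by (auto intro: map_cong)
      have "set (map p1 xs) \<subseteq> A" using D by auto
      then have mC: "Y_G (map p1 xs) = Y_e (map p1 xs)" using yA by simp
      show "Y xs = Y_e xs" unfolding YF mA mB mC by simp
    qed
  qed
  have fixG: "fixed_space rho = G"
  proof
    show "fixed_space rho \<subseteq> G"
    proof
      fix x assume "x \<in> fixed_space rho"
      then have "p1 x + - p2 x + p3 x = p1 x + p2 x + p3 x" using rx[of x] D[of x] unfolding fixed_space_def by simp
      then have "p2 x + p2 x = 0" by (simp add: algebra_simps)
      then have "p2 x = 0" by (rule vz[OF vs])
      then show "x \<in> G" using D[of x] m13[of x] by simp
    qed
    show "G \<subseteq> fixed_space rho"
    proof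
      fix x assume x: "x \<in> G"
      show "x \<in> fixed_space rho" unfolding fixed_space_def using rx[of x] PG[OF x] by (simp add: add.commute)
    qed
  qed
  have FG': "formal_frobenius scale (fixed_space rho) eta Y"
    unfolding fixG
  proof (rule FF_cong[OF vs FG[folded G_def]])
    show "\<forall>x\<in>G. \<forall>y\<in>G. eta x y = eta_G x y"
    proof (intro ballI)
      fix x y assume xy: "x \<in> G" "y \<in> G"
      show "eta x y = eta_G x y" unfolding etaF using PG[OF xy(1)] PG[OF xy(2)] by simp
    qed
    show "\<forall>xs. set xs \<subseteq> G \<longrightarrow> Y xs = Y_G xs"
    proof (intro allI impI)
      fix xs :: "'v list" assume xs: "set xs \<subseteq> G"
      have mA: "map (\<lambda>x. p1 x + p3 x) xs = xs" using PG xs by (auto intro: map_idI)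
      have mB: "map (\<lambda>x. p1 x + p2 x) xs = map p1 xs" using PG xs by (auto intro: map_cong)
      show "Y xs = Y_G xs" unfolding YF mA mB by simp
    qed
  qed
  have "pre_Z2_frobenius scale E C rho eta Y"
    unfolding pre_Z2_frobenius_def
    using fin sE sC EC spl lin rr rE rCC rC bl sm nd ri orth len3 ml br GD[folded E_def Y_def] FE' FG'
    by blast
  then show ?thesis unfolding E_def eta_def Y_def .

qed


end

theorem theorem5p3:
  fixes scale :: "'k::field_char_0 \<Rightarrow> 'v::ab_group_add \<Rightarrow> 'v"
  assumes "vector_space scale"
  shows
   "(\<forall>Hi Hv Hg rho eta_e Y_e eta_G Y_G.
       direct3 scale Hi Hv Hg \<and>
       Vector_Spaces.linear scale scale rho \<and>
       (\<forall>a\<in>Hi. rho a = a) \<and> (\<forall>b\<in>Hv. rho b = - b) \<and> (\<forall>c\<in>Hg. rho c = c) \<and>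
       formal_frobenius scale (set_plus Hi Hv) eta_e Y_e \<and>
       formal_frobenius scale (set_plus Hi Hg) eta_G Y_G \<and>
       (\<forall>x\<in>Hi. \<forall>y\<in>Hi. eta_e x y = eta_G x y) \<and>
       (\<forall>xs. set xs \<subseteq> Hi \<longrightarrow> Y_e xs = Y_G xs) \<and>
       G_degree_e (set_plus Hi Hv) Hg (Y_glue Hi Hv Hg Y_e Y_G) \<and>
       hom2 (pr1 Hi Hv Hg) (eta_i Hi Hv Hg eta_e) \<and>
       hom2 (pr2 Hi Hv Hg) (eta_v Hi Hv Hg eta_e) \<and>
       hom2 (pr3 Hi Hv Hg) (eta_g Hi Hv Hg eta_e eta_G)
     \<longrightarrow> pre_Z2_frobenius scale (set_plus Hi Hv) Hg rho
           (eta_glue Hi Hv Hg eta_e eta_G) (Y_glue Hi Hv Hg Y_e Y_G))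
  \<and>
   (\<forall>He Hg rho eta Y.
       pre_Z2_frobenius scale He Hg rho eta Y \<longrightarrow>
       direct3 scale (He \<inter> fixed_space rho) {x\<in>He. rho x = - x} Hg \<and>
       He = set_plus (He \<inter> fixed_space rho) {x\<in>He. rho x = - x} \<and>
       fixed_space rho = set_plus (He \<inter> fixed_space rho) Hg \<and>
       G_degree_e He Hg (Y_glue (He \<inter> fixed_space rho) {x\<in>He. rho x = - x} Hg Y Y) \<and>
       hom2 (pr1 (He \<inter> fixed_space rho) {x\<in>He. rho x = - x} Hg)
            (eta_i (He \<inter> fixed_space rho) {x\<in>He. rho x = - x} Hg eta) \<and>
       hom2 (pr2 (He \<inter> fixed_space rho) {x\<in>He. rho x = - x} Hg)
            (eta_v (He \<inter> fixed_space rho) {x\<in>He. rho x = - x} Hg eta) \<and>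
       hom2 (pr3 (He \<inter> fixed_space rho) {x\<in>He. rho x = - x} Hg)
            (eta_g (He \<inter> fixed_space rho) {x\<in>He. rho x = - x} Hg eta eta) \<and>
       eta = eta_glue (He \<inter> fixed_space rho) {x\<in>He. rho x = - x} Hg eta eta \<and>
       Y = Y_glue (He \<inter> fixed_space rho) {x\<in>He. rho x = - x} Hg Y Y)
  \<and>
   (\<forall>He Hg rho eta Y eta' Y'.
       pre_Z2_frobenius scale He Hg rho eta Y \<and>
       pre_Z2_frobenius scale He Hg rho eta' Y' \<and>
       (\<forall>x\<in>He. \<forall>y\<in>He. eta x y = eta' x y) \<and>
       (\<forall>x\<in>fixed_space rho. \<forall>y\<in>fixed_space rho. eta x y = eta' x y) \<and>
       (\<forall>xs. set xs \<subseteq> He \<longrightarrow> Y xs = Y' xs) \<and>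
       (\<forall>xs. set xs \<subseteq> fixed_space rho \<longrightarrow> Y xs = Y' xs)
     \<longrightarrow> eta = eta' \<and> Y = Y')"
proof -
  have P1: "\<forall>Hi Hv Hg rho eta_e Y_e eta_G Y_G.
       direct3 scale Hi Hv Hg \<and>
       Vector_Spaces.linear scale scale rho \<and>
       (\<forall>a\<in>Hi. rho a = a) \<and> (\<forall>b\<in>Hv. rho b = - b) \<and> (\<forall>c\<in>Hg. rho c = c) \<and>
       formal_frobenius scale (set_plus Hi Hv) eta_e Y_e \<and>
       formal_frobenius scale (set_plus Hi Hg) eta_G Y_G \<and>
       (\<forall>x\<in>Hi. \<forall>y\<in>Hi. eta_e x y = eta_G x y) \<and>
       (\<forall>xs. set xs \<subseteq> Hi \<longrightarrow> Y_e xs = Y_G xs) \<and>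
       G_degree_e (set_plus Hi Hv) Hg (Y_glue Hi Hv Hg Y_e Y_G) \<and>
       hom2 (pr1 Hi Hv Hg) (eta_i Hi Hv Hg eta_e) \<and>
       hom2 (pr2 Hi Hv Hg) (eta_v Hi Hv Hg eta_e) \<and>
       hom2 (pr3 Hi Hv Hg) (eta_g Hi Hv Hg eta_e eta_G)
     \<longrightarrow> pre_Z2_frobenius scale (set_plus Hi Hv) Hg rho
           (eta_glue Hi Hv Hg eta_e eta_G) (Y_glue Hi Hv Hg Y_e Y_G)"
  proof (intro allI impI)
    fix Hi Hv Hg rho eta_e Y_e eta_G Y_G
    assume h: "direct3 scale Hi Hv Hg \<and>
       Vector_Spaces.linear scale scale rho \<and>
       (\<forall>a\<in>Hi. rho a = a) \<and> (\<forall>b\<in>Hv. rho b = - b) \<and> (\<forall>c\<in>Hg. rho c = c) \<and>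
       formal_frobenius scale (set_plus Hi Hv) eta_e Y_e \<and>
       formal_frobenius scale (set_plus Hi Hg) eta_G Y_G \<and>
       (\<forall>x\<in>Hi. \<forall>y\<in>Hi. eta_e x y = eta_G x y) \<and>
       (\<forall>xs. set xs \<subseteq> Hi \<longrightarrow> Y_e xs = Y_G xs) \<and>
       G_degree_e (set_plus Hi Hv) Hg (Y_glue Hi Hv Hg Y_e Y_G) \<and>
       hom2 (pr1 Hi Hv Hg) (eta_i Hi Hv Hg eta_e) \<and>
       hom2 (pr2 Hi Hv Hg) (eta_v Hi Hv Hg eta_e) \<and>
       hom2 (pr3 Hi Hv Hg) (eta_g Hi Hv Hg eta_e eta_G)"
    then show "pre_Z2_frobenius scale (set_plus Hi Hv) Hg rho
           (eta_glue Hi Hv Hg eta_e eta_G) (Y_glue Hi Hv Hg Y_e Y_G)"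
      by (elim conjE) (rule part1[OF assms])
  qed
  have P2: "\<forall>He Hg rho eta Y.
       pre_Z2_frobenius scale He Hg rho eta Y \<longrightarrow>
       direct3 scale (He \<inter> fixed_space rho) {x\<in>He. rho x = - x} Hg \<and>
       He = set_plus (He \<inter> fixed_space rho) {x\<in>He. rho x = - x} \<and>
       fixed_space rho = set_plus (He \<inter> fixed_space rho) Hg \<and>
       G_degree_e He Hg (Y_glue (He \<inter> fixed_space rho) {x\<in>He. rho x = - x} Hg Y Y) \<and>
       hom2 (pr1 (He \<inter> fixed_space rho) {x\<in>He. rho x = - x} Hg)
            (eta_i (He \<inter> fixed_space rho) {x\<in>He. rho x = - x} Hg eta) \<and>
       hom2 (pr2 (He \<inter> fixed_space rho) {x\<in>He. rho x = - x} Hg)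
            (eta_v (He \<inter> fixed_space rho) {x\<in>He. rho x = - x} Hg eta) \<and>
       hom2 (pr3 (He \<inter> fixed_space rho) {x\<in>He. rho x = - x} Hg)
            (eta_g (He \<inter> fixed_space rho) {x\<in>He. rho x = - x} Hg eta eta) \<and>
       eta = eta_glue (He \<inter> fixed_space rho) {x\<in>He. rho x = - x} Hg eta eta \<and>
       Y = Y_glue (He \<inter> fixed_space rho) {x\<in>He. rho x = - x} Hg Y Y"
  proof (intro allI impI)
    fix He Hg rho eta Y
    assume "pre_Z2_frobenius scale He Hg rho eta Y"
    then show "direct3 scale (He \<inter> fixed_space rho) {x\<in>He. rho x = - x} Hg \<and>
       He = set_plus (He \<inter> fixed_space rho) {x\<in>He. rho x = - x} \<and>
       fixed_space rho = set_plus (He \<inter> fixed_space rho) Hg \<and>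
       G_degree_e He Hg (Y_glue (He \<inter> fixed_space rho) {x\<in>He. rho x = - x} Hg Y Y) \<and>
       hom2 (pr1 (He \<inter> fixed_space rho) {x\<in>He. rho x = - x} Hg)
            (eta_i (He \<inter> fixed_space rho) {x\<in>He. rho x = - x} Hg eta) \<and>
       hom2 (pr2 (He \<inter> fixed_space rho) {x\<in>He. rho x = - x} Hg)
            (eta_v (He \<inter> fixed_space rho) {x\<in>He. rho x = - x} Hg eta) \<and>
       hom2 (pr3 (He \<inter> fixed_space rho) {x\<in>He. rho x = - x} Hg)
            (eta_g (He \<inter> fixed_space rho) {x\<in>He. rho x = - x} Hg eta eta) \<and>
       eta = eta_glue (He \<inter> fixed_space rho) {x\<in>He. rho x = - x} Hg eta eta \<and>
       Y = Y_glue (He \<inter> fixed_space rho) {x\<in>He. rho x = - x} Hg Y Y"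
      by (rule part2[OF assms])
  qed
  have P3: "\<forall>He Hg rho eta Y eta' Y'.
       pre_Z2_frobenius scale He Hg rho eta Y \<and>
       pre_Z2_frobenius scale He Hg rho eta' Y' \<and>
       (\<forall>x\<in>He. \<forall>y\<in>He. eta x y = eta' x y) \<and>
       (\<forall>x\<in>fixed_space rho. \<forall>y\<in>fixed_space rho. eta x y = eta' x y) \<and>
       (\<forall>xs. set xs \<subseteq> He \<longrightarrow> Y xs = Y' xs) \<and>
       (\<forall>xs. set xs \<subseteq> fixed_space rho \<longrightarrow> Y xs = Y' xs)
     \<longrightarrow> eta = eta' \<and> Y = Y'"
  proof (intro allI impI)
    fix He Hg rho eta Y eta' Y'
    assume "pre_Z2_frobenius scale He Hg rho eta Y \<and>
       pre_Z2_frobenius scale He Hg rho eta' Y' \<and>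
       (\<forall>x\<in>He. \<forall>y\<in>He. eta x y = eta' x y) \<and>
       (\<forall>x\<in>fixed_space rho. \<forall>y\<in>fixed_space rho. eta x y = eta' x y) \<and>
       (\<forall>xs. set xs \<subseteq> He \<longrightarrow> Y xs = Y' xs) \<and>
       (\<forall>xs. set xs \<subseteq> fixed_space rho \<longrightarrow> Y xs = Y' xs)"
    then show "eta = eta' \<and> Y = Y'" by (elim conjE) (rule part3[OF assms])
  qed
  show ?thesis using P1 P2 P3 by (intro conjI)
qed

end
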